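(* Let $\mathbb F$ be a field and $\lambda\in\mathbb F$, $\lambda\ne0$. With $J$, $K_{XY}$ ($5n\times 5n$, for $X,Y\in\mathbb F^{n\times n}$) and $M_1,M_2$ (with $m=5n$) as defined in the context, for all $X,Y,X',Y'\in\mathbb F^{n\times n}$ the pairs $(X,Y)$ and $(X',Y')$ are similar if and only if $(M_1(\lambda I_{5n}+J),M_2(K_{XY}))$ and $(M_1(\lambda I_{5n}+J),M_2(K_{X'Y'}))$ are weakly similar. Moreover $M_1(\lambda I_{5n}+J)$ and $M_2(K_{XY})$ commute, and if additionally $\lambda\neq-1$ then $M_1(\lambda I_{5n}+J)+M_2(K_{XY})$ is nonsingular.
   Context: For $X,Y\in\mathbb F^{n\times n}$, $J$ and $K_{XY}$ are the $5n\times 5n$ block matrices (blocks $n\times n$) $J=\begin{bmatrix}0&I_n&0&0&0\\0&0&I_n&0&0\\0&0&0&I_n&0\\0&0&0&0&0\\0&0&0&0&0\end{bmatrix}$, $K_{XY}=\begin{bmatrix}0&0&X&0&Y\\0&0&0&X&0\\0&0&0&0&0\\0&0&0&0&0\\0&0&0&I_n&0\end{bmatrix}$. For $A,B\in\mathbb F^{m\times m}$: $M_1(A)=I_{2m+2}\oplus 0_{3m+3}\oplus I_{m+1}\oplus A$, $M_2(B)=0_{2m+2}\oplus I_{3m+3}\oplus \lambda I_{m+1}\oplus B$. Pairs $(M,N)$, $(M',N')$ are similar if $(S^{-1}MS,S^{-1}NS)=(M',N')$ for some nonsingular $S$; weakly similar if $(M',N')=(S^{-1}(\alpha M+\beta N)S,S^{-1}(\gamma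 M+\delta N)S)$ for some nonsingular $S$ and nonsingular $\begin{bmatrix}\alpha&\beta\\ \gamma&\delta\end{bmatrix}$. *)

theory Defs
  imports "Jordan_Normal_Form.Matrix"
begin

definition dsum :: "'a::zero mat \<Rightarrow> 'a mat \<Rightarrow> 'a mat" where
  "dsum A B = four_block_mat A (0\<^sub>m (dim_row A) (dim_col B)) (0\<^sub>m (dim_row B) (dim_col A)) B"

definition blocks5 :: "nat \<Rightarrow> (nat \<Rightarrow> nat \<Rightarrow> 'a mat) \<Rightarrow> 'a mat" where
  "blocks5 n blk = mat (5*n) (5*n) (\<lambda>(i,j). blk (i div n) (j div n) $$ (i mod n, j mod n))"

definition Jmat :: "nat \<Rightarrow> 'a::{zero,one} mat" where
  "Jmat n = blocks5 n (\<lambda>p q. if q = p + 1 \<and> p < 3 then 1\<^sub>m n else 0\<^sub>m n n)"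

definition Kmat :: "nat \<Rightarrow> 'a::{zero,one} mat \<Rightarrow> 'a mat \<Rightarrow> 'a mat" where
  "Kmat n X Y = blocks5 n (\<lambda>p q.
      if (p,q) = (0,2) then X
      else if (p,q) = (0,4) then Y
      else if (p,q) = (1,3) then X
      else if (p,q) = (4,3) then 1\<^sub>m n
      else 0\<^sub>m n n)"

definition M1 :: "'a::{zero,one} mat \<Rightarrow> 'a mat" where
  "M1 A = (let m = dim_row A in
     dsum (1\<^sub>m (2*m+2)) (dsum (0\<^sub>m (3*m+3) (3*m+3)) (dsum (1\<^sub>m (m+1)) A)))"

definition M2 :: "'a::semiring_1 \<Rightarrow> 'a mat \<Rightarrow> 'a mat" where
  "M2 lam B = (let m = dim_row B in
     dsum (0\<^sub>m (2*m+2) (2*m+2)) (dsum (1\<^sub>m (3*m+3)) (dsum (lam \<cdot>\<^sub>m 1\<^sub>m (m+1)) B)))"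

definition pair_similar :: "nat \<Rightarrow> 'a::comm_ring_1 mat \<times> 'a mat \<Rightarrow> 'a mat \<times> 'a mat \<Rightarrow> bool" where
  "pair_similar k P P' \<longleftrightarrow> (\<exists>S Sinv. S \<in> carrier_mat k k \<and> Sinv \<in> carrier_mat k k \<and>
      S * Sinv = 1\<^sub>m k \<and> Sinv * S = 1\<^sub>m k \<and>
      Sinv * fst P * S = fst P' \<and> Sinv * snd P * S = snd P')"

definition pair_weakly_similar :: "nat \<Rightarrow> 'a::comm_ring_1 mat \<times> 'a mat \<Rightarrow> 'a mat \<times> 'a mat \<Rightarrow> bool" where
  "pair_weakly_similar k P P' \<longleftrightarrow> (\<exists>S Sinv \<alpha> \<beta> \<gamma> \<delta>. S \<in> carrier_mat k k \<and> Sinv \<in> carrier_mat k k \<and>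
      S * Sinv = 1\<^sub>m k \<and> Sinv * S = 1\<^sub>m k \<and> \<alpha> * \<delta> - \<beta> * \<gamma> \<noteq> 0 \<and>
      Sinv * (\<alpha> \<cdot>\<^sub>m fst P + \<beta> \<cdot>\<^sub>m snd P) * S = fst P' \<and>
      Sinv * (\<gamma> \<cdot>\<^sub>m fst P + \<delta> \<cdot>\<^sub>m snd P) * S = snd P')"

end

theory Submission imports Defs "Jordan_Normal_Form.Matrix_Kernel" "Jordan_Normal_Form.Determinant"
begin

lemma dsum_dims[simp]: "dim_row (dsum A B) = dim_row A + dim_row B" "dim_col (dsum A B) = dim_col A + dim_col B"
  unfolding dsum_def by auto

lemma dsum_carrier[simp]: "A \<in> carrier_mat a a \<Longrightarrow> B \<in> carrier_mat b b \<Longrightarrow> dsum A B \<in> carrier_mat (a+b) (a+b)"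
  unfolding dsum_def by auto

lemma dsum_index: assumes "i < dim_row A + dim_row B" "j < dim_col A + dim_col B"
  shows "dsum A B $$ (i,j) = (if i < dim_row A then (if j < dim_col A then A$$(i,j) else 0) else (if j < dim_col A then 0 else B$$(i-dim_row A,j-dim_col A)))"
  unfolding dsum_def using assms by (auto simp: index_mat_four_block)

lemma M1_carrier: "A \<in> carrier_mat m m \<Longrightarrow> M1 A \<in> carrier_mat (7*m+6) (7*m+6)"
  unfolding M1_def Let_def carrier_mat_def by auto

lemma M2_carrier: "A \<in> carrier_mat m m \<Longrightarrow> M2 lam A \<in> carrier_mat (7*m+6) (7*m+6)"
  unfolding M2_def Let_def carrier_mat_def by auto

lemma M1_index: assumes A: "A \<in> carrier_mat m m" and i: "i < 7*m+6" and j: "j < 7*m+6"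
  shows "M1 A $$ (i,j) = (if i < 6*m+6 \<or> j < 6*m+6 then (if i = j \<and> (i < 2*m+2 \<or> 5*m+5 \<le> i) then 1 else 0)
     else A $$ (i - (6*m+6), j - (6*m+6)))"
  using A i j unfolding M1_def Let_def
  by (auto simp: dsum_index; simp add: ac_simps)

lemma M2_index: assumes A: "A \<in> carrier_mat m m" and i: "i < 7*m+6" and j: "j < 7*m+6"
  shows "M2 lam A $$ (i,j) = (if i < 6*m+6 \<or> j < 6*m+6 then (if i = j then (if i < 2*m+2 then 0 else if i < 5*m+5 then 1 else lam) else 0)
     else A $$ (i - (6*m+6), j - (6*m+6)))"
  using A i j unfolding M2_def Let_def
  by (auto simp: dsum_index; simp add: ac_simps)

lemma mult_index: assumes "A \<in> carrier_mat N N" "B \<in> carrier_mat N N" "i < N" "j < N"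
  shows "(A*B)$$(i,j) = (\<Sum>k<N. A$$(i,k) * B$$(k,j))"
  using assms by (auto simp: scalar_prod_def lessThan_atLeast0 intro!: sum.cong)

lemma mulv_index: assumes "A \<in> carrier_mat N N" "v \<in> carrier_vec N" "i < N"
  shows "(A *\<^sub>v v)$i = (\<Sum>k<N. A$$(i,k) * v$k)"
  using assms by (auto simp: scalar_prod_def lessThan_atLeast0 mult.commute intro!: sum.cong)

lemma sum_split: "(\<Sum>k< a + (b::nat). (f::nat \<Rightarrow> 'b::comm_monoid_add) k) = (\<Sum>k<a. f k) + (\<Sum>k<b. f (a+k))"
  by (induction b) (auto simp: add.assoc)

lemma sum_blocks: "(\<Sum>k< (q::nat)*n. f k) = (\<Sum>p<q. \<Sum>c<n. f (p*n + c))"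
proof (induction q)
  case (Suc q)
  have "(\<Sum>k< Suc q*n. f k) = (\<Sum>k< q*n + n. f k)" by (simp add: add.commute)
  also have "\<dots> = (\<Sum>k< q*n. f k) + (\<Sum>c<n. f (q*n+c))" by (rule sum_split)
  finally show ?case using Suc by simp
qed simp

lemma sum5: "(\<Sum>p<(5::nat). f p) = f 0 + f 1 + f 2 + f 3 + f 4"
  by (simp add: numeral_eq_Suc)

lemma rowM1: assumes T: "T \<in> carrier_mat (7*m+6) (7*m+6)" and B: "B \<in> carrier_mat m m"
  and i: "i < m" and j: "j < 7*m+6"
  shows "(M1 B * T)$$(6*m+6+i, j) = (\<Sum>k<m. B$$(i,k) * T$$(6*m+6+k, j))"
proof -
  have "(M1 B * T)$$(6*m+6+i, j) = (\<Sum>k<(6*m+6) + m. M1 B $$(6*m+6+i,k) * T$$(k,j))"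
    using mult_index[OF M1_carrier[OF B] T, of "6*m+6+i" j] i j by (simp add: ac_simps)
  also have "\<dots> = (\<Sum>k<m. B$$(i,k) * T$$(6*m+6+k, j))"
    unfolding sum_split using i B by (simp add: M1_index)
  finally show ?thesis .
qed

lemma rowM2: assumes T: "T \<in> carrier_mat (7*m+6) (7*m+6)" and B: "B \<in> carrier_mat m m"
  and i: "i < m" and j: "j < 7*m+6"
  shows "(M2 lam B * T)$$(6*m+6+i, j) = (\<Sum>k<m. B$$(i,k) * T$$(6*m+6+k, j))"
proof -
  have "(M2 lam B * T)$$(6*m+6+i, j) = (\<Sum>k<(6*m+6) + m. M2 lam B $$(6*m+6+i,k) * T$$(k,j))"
    using mult_index[OF M2_carrier[OF B] T, of "6*m+6+i" j] i j by (simp add: ac_simps)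
  also have "\<dots> = (\<Sum>k<m. B$$(i,k) * T$$(6*m+6+k, j))"
    unfolding sum_split using i B by (simp add: M2_index)
  finally show ?thesis .
qed

lemma colM1: assumes T: "T \<in> carrier_mat (7*m+6) (7*m+6)" and B: "B \<in> carrier_mat m m"
  and i: "i < 7*m+6" and j: "j < m"
  shows "(T * M1 B)$$(i, 6*m+6+j) = (\<Sum>k<m. T$$(i, 6*m+6+k) * B$$(k,j))"
proof -
  have "(T * M1 B)$$(i, 6*m+6+j) = (\<Sum>k<(6*m+6) + m. T$$(i,k) * M1 B $$(k, 6*m+6+j))"
    using mult_index[OF T M1_carrier[OF B], of i "6*m+6+j"] i j by (simp add: ac_simps)
  also have "\<dots> = (\<Sum>k<m. T$$(i, 6*m+6+k) * B$$(k,j))"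
    unfolding sum_split using j B by (simp add: M1_index)
  finally show ?thesis .
qed

lemma colM2: assumes T: "T \<in> carrier_mat (7*m+6) (7*m+6)" and B: "B \<in> carrier_mat m m"
  and i: "i < 7*m+6" and j: "j < m"
  shows "(T * M2 lam B)$$(i, 6*m+6+j) = (\<Sum>k<m. T$$(i, 6*m+6+k) * B$$(k,j))"
proof -
  have "(T * M2 lam B)$$(i, 6*m+6+j) = (\<Sum>k<(6*m+6) + m. T$$(i,k) * M2 lam B $$(k, 6*m+6+j))"
    using mult_index[OF T M2_carrier[OF B], of i "6*m+6+j"] i j by (simp add: ac_simps)
  also have "\<dots> = (\<Sum>k<m. T$$(i, 6*m+6+k) * B$$(k,j))"
    unfolding sum_split using j B by (simp add: M2_index)
  finally show ?thesis .
qed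

lemma colLow1: assumes T: "T \<in> carrier_mat (7*m+6) (7*m+6)" and B: "B \<in> carrier_mat m m"
  and i: "i < 7*m+6" and j: "j < 6*m+6"
  shows "(T * M1 B)$$(i, j) = T$$(i,j) * (if j < 2*m+2 \<or> 5*m+5 \<le> j then 1 else 0)"
proof -
  have "(T * M1 B)$$(i, j) = (\<Sum>k<7*m+6. T$$(i,k) * M1 B $$(k, j))"
    using mult_index[OF T M1_carrier[OF B], of i j] i j by simp
  also have "\<dots> = (\<Sum>k<7*m+6. if k = j then T$$(i,j) * (if j < 2*m+2 \<or> 5*m+5 \<le> j then 1 else 0) else 0)"
    using j B by (intro sum.cong refl) (auto simp: M1_index)
  also have "\<dots> = T$$(i,j) * (if j < 2*m+2 \<or> 5*m+5 \<le> j then 1 else 0)"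
    using j by simp
  finally show ?thesis .
qed

lemma colLow2: assumes T: "T \<in> carrier_mat (7*m+6) (7*m+6)" and B: "B \<in> carrier_mat m m"
  and i: "i < 7*m+6" and j: "j < 6*m+6"
  shows "(T * M2 lam B)$$(i, j) = T$$(i,j) * (if j < 2*m+2 then 0 else if j < 5*m+5 then 1 else lam)"
proof -
  have "(T * M2 lam B)$$(i, j) = (\<Sum>k<7*m+6. T$$(i,k) * M2 lam B $$(k, j))"
    using mult_index[OF T M2_carrier[OF B], of i j] i j by simp
  also have "\<dots> = (\<Sum>k<7*m+6. if k = j then T$$(i,j) * (if j < 2*m+2 then 0 else if j < 5*m+5 then 1 else lam) else 0)"
    using j B by (intro sum.cong refl) (auto simp: M2_index)
  also have "\<dots> = T$$(i,j) * (if j < 2*m+2 then 0 else if j < 5*m+5 then 1 else lam)"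
    using j by simp
  finally show ?thesis .
qed

lemma idx_lt: "p < (k::nat) \<Longrightarrow> r < n \<Longrightarrow> p*n+r < k*n"
proof -
  assume "p < k" "r < n"
  hence "p*n + r < p*n + n" by simp
  also have "\<dots> = Suc p * n" by simp
  also have "\<dots> \<le> k*n" using \<open>p<k\<close> by (intro mult_le_mono1) simp
  finally show ?thesis .
qed

lemma idx_div: "r < (n::nat) \<Longrightarrow> (p*n+r) div n = p" by simp
lemma idx_mod: "r < (n::nat) \<Longrightarrow> (p*n+r) mod n = r" by simp

lemma idx_eq: "r < (n::nat) \<Longrightarrow> c < n \<Longrightarrow> (p*n+r = q*n+c) \<longleftrightarrow> (p=q \<and> r=c)"
  by (metis idx_div idx_mod)

lemma blocks5_index: "p < 5 \<Longrightarrow> q < 5 \<Longrightarrow> r < n \<Longrightarrow> c < n \<Longrightarrow>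
  blocks5 n f $$ (p*n+r, q*n+c) = f p q $$ (r,c)"
  unfolding blocks5_def using idx_lt[of p 5 r n] idx_lt[of q 5 c n] by simp

lemma blocks5_dims[simp]: "dim_row (blocks5 n f) = 5*n" "dim_col (blocks5 n f) = 5*n"
  unfolding blocks5_def by simp_all

lemma blocks5_carrier[simp]: "blocks5 n f \<in> carrier_mat (5*n) (5*n)"
  unfolding blocks5_def by simp

lemma Jmat_carrier[simp]: "Jmat n \<in> carrier_mat (5*n) (5*n)" unfolding Jmat_def by simp
lemma Kmat_carrier[simp]: "Kmat n X Y \<in> carrier_mat (5*n) (5*n)" unfolding Kmat_def by simp

definition lf :: "'a::semiring_1 \<Rightarrow> nat \<Rightarrow> nat \<Rightarrow> nat \<Rightarrow> nat \<Rightarrow> 'a" where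
  "lf lam p q r c = (if p=q \<and> r=c then lam else 0) + (if q = Suc p \<and> p<3 \<and> r=c then 1 else 0)"

definition kf :: "'a::{zero,one} mat \<Rightarrow> 'a mat \<Rightarrow> nat \<Rightarrow> nat \<Rightarrow> nat \<Rightarrow> nat \<Rightarrow> 'a" where
  "kf X Y p q r c = (if p=0 \<and> q=2 then X$$(r,c) else if p=0 \<and> q=4 then Y$$(r,c)
     else if p=1 \<and> q=3 then X$$(r,c) else if p=4 \<and> q=3 then (if r=c then 1 else 0) else 0)"

abbreviation Lm :: "nat \<Rightarrow> 'a::comm_ring_1 \<Rightarrow> 'a mat" where
  "Lm n lam \<equiv> lam \<cdot>\<^sub>m 1\<^sub>m (5*n) + Jmat n"

lemma Lm_carrier: "Lm n lam \<in> carrier_mat (5*n) (5*n)" by simp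

lemma Lm_index: "p < 5 \<Longrightarrow> q < 5 \<Longrightarrow> r < n \<Longrightarrow> c < n \<Longrightarrow>
  Lm n lam $$ (p*n+r, q*n+c) = lf lam p q r c"
proof -
  assume a: "p < 5" "q < 5" "r < n" "c < n"
  have "Lm n lam $$ (p*n+r, q*n+c) = lam * (1\<^sub>m (5*n) $$ (p*n+r, q*n+c)) + Jmat n $$ (p*n+r, q*n+c)"
    using idx_lt[of p 5 r n] idx_lt[of q 5 c n] a by (simp add: Jmat_def)
  also have "\<dots> = lf lam p q r c"
    using idx_lt[of p 5 r n] idx_lt[of q 5 c n] idx_eq[of r n c p q] a
    by (simp add: Jmat_def blocks5_index lf_def)
  finally show ?thesis .
qed

lemma Kmat_index: "p < 5 \<Longrightarrow> q < 5 \<Longrightarrow> r < n \<Longrightarrow> c < n \<Longrightarrow>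
  Kmat n X Y $$ (p*n+r, q*n+c) = kf X Y p q r c"
  by (simp add: Kmat_def blocks5_index kf_def)

lemma sum_single: assumes "r < (R::nat)" "\<forall>c<R. c \<noteq> r \<longrightarrow> g c = 0"
  shows "(\<Sum>c<R. g c) = (g r :: 'b::comm_monoid_add)"
proof -
  have "(\<Sum>c<R. g c) = g r + (\<Sum>c\<in>{..<R}-{r}. g c)"
    using assms(1) by (simp add: sum.remove)
  also have "(\<Sum>c\<in>{..<R}-{r}. g c) = 0" using assms(2) by (intro sum.neutral) auto
  finally show ?thesis by simp
qed

lemma sum2_single: assumes "p < (P::nat)" "r < (R::nat)" "\<forall>q<P. \<forall>c<R. (q \<noteq> p \<or> c \<noteq> r) \<longrightarrow> g q c = 0"
  shows "(\<Sum>q<P. \<Sum>c<R. g q c) = (g p r :: 'b::comm_monoid_add)"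
proof -
  have "(\<Sum>q<P. \<Sum>c<R. g q c) = (\<Sum>c<R. g p c)"
    using assms by (intro sum_single) (auto intro!: sum.neutral)
  also have "\<dots> = g p r" using assms by (intro sum_single) auto
  finally show ?thesis .
qed

lemma sum2_zero: assumes "\<forall>q<(P::nat). \<forall>c<(R::nat). g q c = 0"
  shows "(\<Sum>q<P. \<Sum>c<R. g q c) = (0 :: 'b::comm_monoid_add)"
  using assms by (auto intro!: sum.neutral)

lemma sum2_distrib: "(\<Sum>q<(P::nat). \<Sum>c<(R::nat). g q c + h q c) = (\<Sum>q<P. \<Sum>c<R. g q c) + (\<Sum>q<P. \<Sum>c<R. (h q c :: 'b::comm_monoid_add))"
  by (simp add: sum.distrib)

lemma lf_rowsum: "p < 5 \<Longrightarrow> r < n \<Longrightarrow>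
  (\<Sum>q<5. \<Sum>c<n. lf lam p q r c * (f :: nat \<Rightarrow> nat \<Rightarrow> 'a::comm_ring_1) q c) = lam * f p r + (if p < 3 then f (Suc p) r else 0)"
proof -
  assume a: "p < 5" "r < n"
  have "(\<Sum>q<5. \<Sum>c<n. lf lam p q r c * f q c) =
    (\<Sum>q<5. \<Sum>c<n. (if p = q \<and> r = c then lam else 0) * f q c + (if q = Suc p \<and> p < 3 \<and> r = c then 1 else 0) * f q c)"
    by (intro sum.cong refl) (auto simp: lf_def distrib_right)
  also have "\<dots> = (\<Sum>q<5. \<Sum>c<n. (if p = q \<and> r = c then lam else 0) * f q c) + 
      (\<Sum>q<5. \<Sum>c<n. (if q = Suc p \<and> p < 3 \<and> r = c then 1 else 0) * f q c)" by (rule sum2_distrib)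
  also have "(\<Sum>q<5. \<Sum>c<n. (if p = q \<and> r = c then lam else 0) * f q c) = lam * f p r"
    using a by (subst sum2_single[of p _ r]) auto
  also have "(\<Sum>q<5. \<Sum>c<n. (if q = Suc p \<and> p < 3 \<and> r = c then 1 else 0) * f q c) = (if p < 3 then f (Suc p) r else 0)"
  proof (cases "p < 3")
    case True thus ?thesis using a by (subst sum2_single[of "Suc p" _ r]) auto
  next
    case False thus ?thesis by (subst sum2_zero) auto
  qed
  finally show ?thesis .
qed

lemma lf_colsum: "q < 5 \<Longrightarrow> c < n \<Longrightarrow>
  (\<Sum>p<5. \<Sum>r<n. (f :: nat \<Rightarrow> nat \<Rightarrow> 'a::comm_ring_1) p r * lf lam p q r c) = lam * f q c + (if 1 \<le> q \<and> q \<le> 3 then f (q - 1) c else 0)"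
proof -
  assume a: "q < 5" "c < n"
  have "(\<Sum>p<5. \<Sum>r<n. f p r * lf lam p q r c) =
    (\<Sum>p<5. \<Sum>r<n. (if p = q \<and> r = c then lam * f p r else 0) + (if q = Suc p \<and> p < 3 \<and> r = c then f p r else 0))"
    by (intro sum.cong refl) (auto simp: lf_def distrib_left)
  also have "\<dots> = (\<Sum>p<5. \<Sum>r<n. (if p = q \<and> r = c then lam * f p r else 0)) + 
      (\<Sum>p<5. \<Sum>r<n. (if q = Suc p \<and> p < 3 \<and> r = c then f p r else 0))" by (rule sum2_distrib)
  also have "(\<Sum>p<5. \<Sum>r<n. (if p = q \<and> r = c then lam * f p r else 0)) = lam * f q c"
    using a by (subst sum2_single[of q _ c]) auto
  also have "(\<Sum>p<5. \<Sum>r<n. (if q = Suc p \<and> p < 3 \<and> r = c then f p r else 0)) = (if 1 \<le> q \<and> q \<le> 3 then f (q - 1) c else 0)"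
  proof (cases "1 \<le> q \<and> q \<le> 3")
    case True thus ?thesis using a by (subst sum2_single[of "q - 1" _ c]) auto
  next
    case False thus ?thesis by (subst sum2_zero) auto
  qed
  finally show ?thesis .
qed

lemma less5_cases: "(p::nat) < 5 \<Longrightarrow> p = 0 \<or> p = 1 \<or> p = 2 \<or> p = 3 \<or> p = 4" by auto

lemma kf_rowsum: "p < 5 \<Longrightarrow> r < n \<Longrightarrow>
  (\<Sum>q<5. \<Sum>c<n. kf X Y p q r c * (f :: nat \<Rightarrow> nat \<Rightarrow> 'a::comm_ring_1) q c) = (if p = 0 then (\<Sum>c<n. X$$(r,c) * f 2 c) + (\<Sum>c<n. Y$$(r,c) * f 4 c)
     else if p = 1 then (\<Sum>c<n. X$$(r,c) * f 3 c) else if p = 4 then f 3 r else 0)"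
  apply (drule less5_cases)
  apply (elim disjE)
  by (simp_all add: sum5 kf_def if_distrib[of "\<lambda>x. x * _"] cong: if_cong)

lemma kf_colsum: "q < 5 \<Longrightarrow> c < n \<Longrightarrow>
  (\<Sum>p<5. \<Sum>r<n. (f :: nat \<Rightarrow> nat \<Rightarrow> 'a::comm_ring_1) p r * kf X Y p q r c) = (if q = 2 then (\<Sum>r<n. f 0 r * X$$(r,c))
     else if q = 3 then (\<Sum>r<n. f 1 r * X$$(r,c)) + f 4 c else if q = 4 then (\<Sum>r<n. f 0 r * Y$$(r,c)) else 0)"
  apply (drule less5_cases)
  apply (elim disjE)
  by (simp_all add: sum5 kf_def if_distrib[of "\<lambda>x. _ * x"] cong: if_cong)


lemma Jmat_dims[simp]: "dim_row (Jmat n) = 5*n" "dim_col (Jmat n) = 5*n" unfolding Jmat_def by simp_all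
lemma Kmat_dims[simp]: "dim_row (Kmat n X Y) = 5*n" "dim_col (Kmat n X Y) = 5*n" unfolding Kmat_def by simp_all

definition off :: "nat \<Rightarrow> nat" where "off n = 30*n+6"
lemma off_eq: "6*(5*n)+6 = off n" unfolding off_def by simp

abbreviation NN :: "nat \<Rightarrow> nat" where "NN n \<equiv> 7*(5*n)+6"

lemma rowP: assumes T: "(T :: 'a::comm_ring_1 mat) \<in> carrier_mat (NN n) (NN n)" and a: "p < 5" "r < n" "j < NN n"
  shows "(M1 (Lm n lam) * T)$$(off n + (p*n+r), j) = lam * T$$(off n + (p*n+r), j) + (if p<3 then T$$(off n + ((p+1)*n+r), j) else 0)"
proof -
  have "(M1 (Lm n lam) * T)$$(off n + (p*n+r), j) = (\<Sum>k<5*n. Lm n lam$$(p*n+r,k) * T$$(off n + k, j))"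
    using rowM1[OF T Lm_carrier idx_lt[OF a(1,2)] a(3), unfolded off_eq] .
  also have "\<dots> = (\<Sum>q<5. \<Sum>c<n. Lm n lam$$(p*n+r, q*n+c) * T$$(off n + (q*n+c), j))" by (rule sum_blocks)
  also have "\<dots> = (\<Sum>q<5. \<Sum>c<n. lf lam p q r c * T$$(off n + (q*n+c), j))"
    using a by (intro sum.cong refl) (simp add: Lm_index)
  also have "\<dots> = lam * T$$(off n + (p*n+r), j) + (if p<3 then T$$(off n + ((p+1)*n+r), j) else 0)"
    using lf_rowsum[OF a(1,2), where f="\<lambda>q c. T$$(off n + (q*n+c), j)"] by simp
  finally show ?thesis .
qed

lemma colP: assumes T: "(T :: 'a::comm_ring_1 mat) \<in> carrier_mat (NN n) (NN n)" and a: "q < 5" "c < n" "i < NN n"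
  shows "(T * M1 (Lm n lam))$$(i, off n + (q*n+c)) = lam * T$$(i, off n + (q*n+c)) + (if 1 \<le> q \<and> q \<le> 3 then T$$(i, off n + ((q-1)*n+c)) else 0)"
proof -
  have "(T * M1 (Lm n lam))$$(i, off n + (q*n+c)) = (\<Sum>k<5*n. T$$(i, off n + k) * Lm n lam$$(k, q*n+c))"
    using colM1[OF T Lm_carrier a(3) idx_lt[OF a(1,2)], unfolded off_eq] .
  also have "\<dots> = (\<Sum>p<5. \<Sum>r<n. T$$(i, off n + (p*n+r)) * Lm n lam$$(p*n+r, q*n+c))" by (rule sum_blocks)
  also have "\<dots> = (\<Sum>p<5. \<Sum>r<n. T$$(i, off n + (p*n+r)) * lf lam p q r c)"
    using a by (intro sum.cong refl) (simp add: Lm_index)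
  also have "\<dots> = lam * T$$(i, off n + (q*n+c)) + (if 1 \<le> q \<and> q \<le> 3 then T$$(i, off n + ((q-1)*n+c)) else 0)"
    using lf_colsum[OF a(1,2), where f="\<lambda>p r. T$$(i, off n + (p*n+r))"] by simp
  finally show ?thesis .
qed

lemma rowQ: assumes T: "(T :: 'a::comm_ring_1 mat) \<in> carrier_mat (NN n) (NN n)" and a: "p < 5" "r < n" "j < NN n"
  shows "(M2 lam (Kmat n X Y) * T)$$(off n + (p*n+r), j) =
    (if p = 0 then (\<Sum>c<n. X$$(r,c) * T$$(off n + (2*n+c), j)) + (\<Sum>c<n. Y$$(r,c) * T$$(off n + (4*n+c), j))
     else if p = 1 then (\<Sum>c<n. X$$(r,c) * T$$(off n + (3*n+c), j)) else if p = 4 then T$$(off n + (3*n+r), j) else 0)"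
proof -
  have "(M2 lam (Kmat n X Y) * T)$$(off n + (p*n+r), j) = (\<Sum>k<5*n. Kmat n X Y$$(p*n+r,k) * T$$(off n + k, j))"
    using rowM2[OF T Kmat_carrier idx_lt[OF a(1,2)] a(3), unfolded off_eq] .
  also have "\<dots> = (\<Sum>q<5. \<Sum>c<n. Kmat n X Y$$(p*n+r, q*n+c) * T$$(off n + (q*n+c), j))" by (rule sum_blocks)
  also have "\<dots> = (\<Sum>q<5. \<Sum>c<n. kf X Y p q r c * T$$(off n + (q*n+c), j))"
    using a by (intro sum.cong refl) (simp add: Kmat_index)
  finally show ?thesis using kf_rowsum[OF a(1,2), where f="\<lambda>q c. T$$(off n + (q*n+c), j)"] by simp
qed

lemma colQ: assumes T: "(T :: 'a::comm_ring_1 mat) \<in> carrier_mat (NN n) (NN n)" and a: "q < 5" "c < n" "i < NN n"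
  shows "(T * M2 lam (Kmat n X Y))$$(i, off n + (q*n+c)) =
    (if q = 2 then (\<Sum>r<n. T$$(i, off n + (0*n+r)) * X$$(r,c))
     else if q = 3 then (\<Sum>r<n. T$$(i, off n + (1*n+r)) * X$$(r,c)) + T$$(i, off n + (4*n+c))
     else if q = 4 then (\<Sum>r<n. T$$(i, off n + (0*n+r)) * Y$$(r,c)) else 0)"
proof -
  have "(T * M2 lam (Kmat n X Y))$$(i, off n + (q*n+c)) = (\<Sum>k<5*n. T$$(i, off n + k) * Kmat n X Y$$(k, q*n+c))"
    using colM2[OF T Kmat_carrier a(3) idx_lt[OF a(1,2)], unfolded off_eq] .
  also have "\<dots> = (\<Sum>p<5. \<Sum>r<n. T$$(i, off n + (p*n+r)) * Kmat n X Y$$(p*n+r, q*n+c))" by (rule sum_blocks)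
  also have "\<dots> = (\<Sum>p<5. \<Sum>r<n. T$$(i, off n + (p*n+r)) * kf X Y p q r c)"
    using a by (intro sum.cong refl) (simp add: Kmat_index)
  finally show ?thesis using kf_colsum[OF a(1,2), where f="\<lambda>p r. T$$(i, off n + (p*n+r))"] by simp
qed

lemma colLowP: assumes T: "(T :: 'a::comm_ring_1 mat) \<in> carrier_mat (NN n) (NN n)" and a: "i < NN n" "j < off n"
  shows "(T * M1 (Lm n lam))$$(i, j) = T$$(i,j) * (if j < 10*n+2 \<or> 25*n+5 \<le> j then 1 else 0)"
  using colLow1[OF T Lm_carrier a(1), of j] a(2) by (simp add: off_def)

lemma colLowQ: assumes T: "(T :: 'a::comm_ring_1 mat) \<in> carrier_mat (NN n) (NN n)" and a: "i < NN n" "j < off n"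
  shows "(T * M2 lam (Kmat n X Y))$$(i, j) = T$$(i,j) * (if j < 10*n+2 then 0 else if j < 25*n+5 then 1 else lam)"
  using colLow2[OF T Kmat_carrier a(1), of j] a(2) by (simp add: off_def)

lemma idx_N: "p < 5 \<Longrightarrow> r < n \<Longrightarrow> off n + (p*n+r) < NN n"
  using idx_lt[of p 5 r n] by (simp add: off_def)

lemma stepB_facts:
  fixes T :: "'a::field mat"
  assumes T: "T \<in> carrier_mat (NN n) (NN n)" and lam: "lam \<noteq> 0"
  and H1: "M1 (Lm n lam) * T = T * M1 (Lm n lam)"
  and H2: "M2 lam (Kmat n X1 Y1) * T = T * M2 lam (Kmat n X2 Y2)"
  and r: "r < n" and c: "c < n"
  shows "T$$(off n + (n+r), off n + (n+c)) = T$$(off n + r, off n + c)"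
    and "T$$(off n + (2*n+r), off n + (2*n+c)) = T$$(off n + (n+r), off n + (n+c))"
    and "T$$(off n + (3*n+r), off n + (3*n+c)) = T$$(off n + (2*n+r), off n + (2*n+c))"
    and "T$$(off n + (n+r), off n + (4*n+c)) = 0"
    and "T$$(off n + (2*n+r), off n + (4*n+c)) = 0"
    and "T$$(off n + (4*n+r), off n + (n+c)) = 0"
proof -
  have eP: "\<And>i j. i < NN n \<Longrightarrow> j < NN n \<Longrightarrow> (M1 (Lm n lam) * T)$$(i,j) = (T * M1 (Lm n lam))$$(i,j)"
    using H1 by simp
  have FP: "\<And>p q. p < 5 \<Longrightarrow> q < 5 \<Longrightarrow> (if p<3 then T$$(off n + ((p+1)*n+r), off n + (q*n+c)) else 0)
     = (if 1 \<le> q \<and> q \<le> 3 then T$$(off n + (p*n+r), off n + ((q-1)*n+c)) else 0)"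
  proof -
    fix p q :: nat assume pq: "p < 5" "q < 5"
    from eP[OF idx_N[OF pq(1) r] idx_N[OF pq(2) c]]
    show "?thesis p q"
      unfolding rowP[OF T pq(1) r idx_N[OF pq(2) c]] colP[OF T pq(2) c idx_N[OF pq(1) r]] by simp
  qed
  show "T$$(off n + (n+r), off n + (n+c)) = T$$(off n + r, off n + c)" using FP[of 0 1] by simp
  show "T$$(off n + (2*n+r), off n + (2*n+c)) = T$$(off n + (n+r), off n + (n+c))" using FP[of 1 2] by (simp add: mult_2)
  show "T$$(off n + (3*n+r), off n + (3*n+c)) = T$$(off n + (2*n+r), off n + (2*n+c))" using FP[of 2 3] by simp
  show "T$$(off n + (n+r), off n + (4*n+c)) = 0" using FP[of 0 4] by simp
  show "T$$(off n + (2*n+r), off n + (4*n+c)) = 0" using FP[of 1 4] by (simp add: mult_2)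
  show "T$$(off n + (4*n+r), off n + (n+c)) = 0" using FP[of 4 2] by simp
qed

lemma stepB_zero:
  fixes T :: "'a::field mat"
  assumes T: "T \<in> carrier_mat (NN n) (NN n)" and lam: "lam \<noteq> 0"
  and H1: "M1 (Lm n lam) * T = T * M1 (Lm n lam)"
  and H2: "M2 lam (Kmat n X1 Y1) * T = T * M2 lam (Kmat n X2 Y2)"
  and r: "r < n" and j: "j < NN n" and jn: "j < off n + 3*n \<or> off n + 4*n \<le> j"
  shows "T$$(off n + (3*n+r), j) = 0"
proof -
  have eP: "\<And>i j. i < NN n \<Longrightarrow> j < NN n \<Longrightarrow> (M1 (Lm n lam) * T)$$(i,j) = (T * M1 (Lm n lam))$$(i,j)"
    using H1 by simp
  have eQ: "\<And>i j. i < NN n \<Longrightarrow> j < NN n \<Longrightarrow> (M2 lam (Kmat n X1 Y1) * T)$$(i,j) = (T * M2 lam (Kmat n X2 Y2))$$(i,j)"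
    using H2 by simp
  have i3: "off n + (3*n+r) < NN n" using idx_N[of 3 r n] r by simp
  have i4: "off n + (4*n+r) < NN n" using idx_N[of 4 r n] r by simp
  have Z1: "T$$(off n + (3*n+r), off n + (q*n+c)) = 0" if q: "q < 3" and c: "c < n" for q c
  proof -
    have q1: "q+1 < 5" using q by simp
    from eP[OF i3 idx_N[OF q1 c]]
    show ?thesis
      using rowP[OF T _ r idx_N[OF q1 c], of 3 lam] colP[OF T q1 c i3, of lam] q by simp
  qed
  have Z2: "T$$(off n + (3*n+r), off n + (4*n+c)) = 0" if c: "c < n" for c
  proof -
    have 3: "(3::nat) < 5" by simp
    from eQ[OF i3 idx_N[OF 3 c]]
    have "0 = (\<Sum>r'<n. T$$(off n + (3*n+r), off n + (1*n+r')) * X2$$(r',c)) + T$$(off n + (3*n+r), off n + (4*n+c))"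
      using rowQ[OF T 3 r idx_N[OF 3 c], of lam X1 Y1] colQ[OF T 3 c i3, of lam X2 Y2] by simp
    moreover have "(\<Sum>r'<n. T$$(off n + (3*n+r), off n + (1*n+r')) * X2$$(r',c)) = 0"
      using Z1[of 1] by (intro sum.neutral) auto
    ultimately show ?thesis by simp
  qed
  have Z3: "T$$(off n + (3*n+r), j) = 0" if j: "j < off n" for j
  proof -
    have jN: "j < NN n" using j by (simp add: off_def)
    have 3: "(3::nat) < 5" and 4: "(4::nat) < 5" by simp_all
    have a: "lam * T$$(off n + (3*n+r), j) = T$$(off n + (3*n+r), j) * (if j < 10*n+2 \<or> 25*n+5 \<le> j then 1 else 0)"
      using eP[OF i3 jN] rowP[OF T 3 r jN, of lam] colLowP[OF T i3 j, of lam] by simp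
    have b: "0 = T$$(off n + (3*n+r), j) * (if j < 10*n+2 then 0 else if j < 25*n+5 then 1 else lam)"
      using eQ[OF i3 jN] rowQ[OF T 3 r jN, of lam X1 Y1] colLowQ[OF T i3 j, of lam X2 Y2] by simp
    have d: "T$$(off n + (3*n+r), j) = T$$(off n + (4*n+r), j) * (if j < 10*n+2 then 0 else if j < 25*n+5 then 1 else lam)"
      using eQ[OF i4 jN] rowQ[OF T 4 r jN, of lam X1 Y1] colLowQ[OF T i4 j, of lam X2 Y2] by simp
    show ?thesis
    proof (cases "j < 10*n+2")
      case True thus ?thesis using d by simp
    next
      case False
      show ?thesis
      proof (cases "j < 25*n+5")
        case True thus ?thesis using a False lam by simp
      next
        case F2: False thus ?thesis using b False lam by simp
      qed
    qed
  qed
  show ?thesis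
  proof (cases "j < off n")
    case True thus ?thesis by (rule Z3)
  next
    case False
    define k where "k = j - off n"
    have k: "k < 5*n" using j False unfolding k_def by (simp add: off_def)
    have jk: "j = off n + ((k div n)*n + k mod n)" using False unfolding k_def by simp
    have kn: "k mod n < n" using k by (cases "n = 0") auto
    have q: "k div n \<noteq> 3"
    proof
      assume "k div n = 3"
      hence "k = 3*n + k mod n" using div_mult_mod_eq[of k n] by simp
      thus False using jn False kn unfolding k_def by linarith
    qed
    have q5: "k div n < 5" using k by (simp add: less_mult_imp_div_less)
    show ?thesis
    proof (cases "k div n < 3")
      case True thus ?thesis using Z1[OF True kn] jk by simp
    next
      case False
      hence "k div n = 4" using q q5 by simp
      thus ?thesis using Z2[OF kn] jk by simp
    qed
  qed
qed

definition Ablk :: "nat \<Rightarrow> 'a mat \<Rightarrow> 'a mat" where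
  "Ablk n T = mat n n (\<lambda>(r,c). T$$(off n + (3*n+r), off n + (3*n+c)))"

lemma Ablk_carrier[simp]: "Ablk n T \<in> carrier_mat n n" unfolding Ablk_def by simp
lemma Ablk_dims[simp]: "dim_row (Ablk n T) = n" "dim_col (Ablk n T) = n" unfolding Ablk_def by simp_all

lemma stepB_XY:
  fixes T :: "'a::field mat"
  assumes T: "T \<in> carrier_mat (NN n) (NN n)" and lam: "lam \<noteq> 0"
  and H1: "M1 (Lm n lam) * T = T * M1 (Lm n lam)"
  and H2: "M2 lam (Kmat n X1 Y1) * T = T * M2 lam (Kmat n X2 Y2)"
  and X: "X1 \<in> carrier_mat n n" "X2 \<in> carrier_mat n n" "Y1 \<in> carrier_mat n n" "Y2 \<in> carrier_mat n n"
  shows "X1 * Ablk n T = Ablk n T * X2" "Y1 * Ablk n T = Ablk n T * Y2"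
proof -
  note F = stepB_facts[OF T lam H1 H2]
  have eQ: "\<And>i j. i < NN n \<Longrightarrow> j < NN n \<Longrightarrow> (M2 lam (Kmat n X1 Y1) * T)$$(i,j) = (T * M2 lam (Kmat n X2 Y2))$$(i,j)"
    using H2 by simp
  have 0: "(0::nat) < 5" and 1: "(1::nat) < 5" and 3: "(3::nat) < 5" and 4: "(4::nat) < 5" by simp_all
  have A11: "T$$(off n + (n+r), off n + (n+c)) = Ablk n T $$ (r,c)" if "r<n" "c<n" for r c
    using F(2)[OF that] F(3)[OF that] that by (simp add: Ablk_def)
  have A00: "T$$(off n + r, off n + c) = Ablk n T $$ (r,c)" if "r<n" "c<n" for r c
    using F(1)[OF that] A11[OF that] by simp
  have A44: "T$$(off n + (4*n+r), off n + (4*n+c)) = Ablk n T $$ (r,c)" if r: "r<n" and c: "c<n" for r c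
  proof -
    have i4: "off n + (4*n+r) < NN n" using idx_N[of 4 r n] r by simp
    from eQ[OF i4 idx_N[OF 3 c]]
    have "T$$(off n + (3*n+r), off n + (3*n+c)) = (\<Sum>r'<n. T$$(off n + (4*n+r), off n + (1*n+r')) * X2$$(r',c)) + T$$(off n + (4*n+r), off n + (4*n+c))"
      using rowQ[OF T 4 r idx_N[OF 3 c], of lam X1 Y1] colQ[OF T 3 c i4, of lam X2 Y2] by simp
    moreover have "(\<Sum>r'<n. T$$(off n + (4*n+r), off n + (1*n+r')) * X2$$(r',c)) = 0"
      using F(6)[OF r] by (intro sum.neutral) auto
    ultimately show ?thesis using r c by (simp add: Ablk_def)
  qed
  show "X1 * Ablk n T = Ablk n T * X2"
  proof (rule eq_matI)
    fix r c assume r: "r < dim_row (Ablk n T * X2)" and c: "c < dim_col (Ablk n T * X2)"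
    hence r: "r < n" and c: "c < n" using X by (auto simp: Ablk_def)
    have i1: "off n + (1*n+r) < NN n" using idx_N[of 1 r n] r by simp
    from eQ[OF i1 idx_N[OF 3 c]]
    have "(\<Sum>c'<n. X1$$(r,c') * T$$(off n + (3*n+c'), off n + (3*n+c))) = (\<Sum>r'<n. T$$(off n + (1*n+r), off n + (1*n+r')) * X2$$(r',c)) + T$$(off n + (1*n+r), off n + (4*n+c))"
      using rowQ[OF T 1 r idx_N[OF 3 c], of lam X1 Y1] colQ[OF T 3 c i1, of lam X2 Y2] by simp
    also have "T$$(off n + (1*n+r), off n + (4*n+c)) = 0" using F(4)[OF r c] by simp
    also have "(\<Sum>r'<n. T$$(off n + (1*n+r), off n + (1*n+r')) * X2$$(r',c)) = (\<Sum>r'<n. Ablk n T$$(r,r') * X2$$(r',c))"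
      using A11 r by (intro sum.cong) auto
    also have "(\<Sum>c'<n. X1$$(r,c') * T$$(off n + (3*n+c'), off n + (3*n+c))) = (\<Sum>c'<n. X1$$(r,c') * Ablk n T$$(c',c))"
      using c by (intro sum.cong) (auto simp: Ablk_def)
    finally show "(X1 * Ablk n T) $$ (r,c) = (Ablk n T * X2) $$ (r,c)"
      using mult_index[OF X(1) Ablk_carrier r c] mult_index[OF Ablk_carrier X(2) r c] by simp
  qed (use X in auto)
  show "Y1 * Ablk n T = Ablk n T * Y2"
  proof (rule eq_matI)
    fix r c assume r: "r < dim_row (Ablk n T * Y2)" and c: "c < dim_col (Ablk n T * Y2)"
    hence r: "r < n" and c: "c < n" using X by (auto simp: Ablk_def)
    have i0: "off n + (0*n+r) < NN n" using idx_N[of 0 r n] r by simp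
    from eQ[OF i0 idx_N[OF 4 c]]
    have "(\<Sum>c'<n. X1$$(r,c') * T$$(off n + (2*n+c'), off n + (4*n+c))) + (\<Sum>c'<n. Y1$$(r,c') * T$$(off n + (4*n+c'), off n + (4*n+c)))
       = (\<Sum>r'<n. T$$(off n + (0*n+r), off n + (0*n+r')) * Y2$$(r',c))"
      using rowQ[OF T 0 r idx_N[OF 4 c], of lam X1 Y1] colQ[OF T 4 c i0, of lam X2 Y2] by simp
    also have "(\<Sum>r'<n. T$$(off n + (0*n+r), off n + (0*n+r')) * Y2$$(r',c)) = (\<Sum>r'<n. Ablk n T$$(r,r') * Y2$$(r',c))"
      using A00 r by (intro sum.cong) auto
    also have "(\<Sum>c'<n. X1$$(r,c') * T$$(off n + (2*n+c'), off n + (4*n+c))) = 0"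
      using F(5) c by (intro sum.neutral) auto
    also have "(\<Sum>c'<n. Y1$$(r,c') * T$$(off n + (4*n+c'), off n + (4*n+c))) = (\<Sum>c'<n. Y1$$(r,c') * Ablk n T$$(c',c))"
      using A44 c by (intro sum.cong) auto
    finally show "(Y1 * Ablk n T) $$ (r,c) = (Ablk n T * Y2) $$ (r,c)"
      using mult_index[OF X(3) Ablk_carrier r c] mult_index[OF Ablk_carrier X(4) r c] by simp
  qed (use X in auto)
qed

lemma Ablk_mult:
  fixes S Si :: "'a::field mat"
  assumes S: "S \<in> carrier_mat (NN n) (NN n)" and Si: "Si \<in> carrier_mat (NN n) (NN n)"
  and Z: "\<And>r j. r < n \<Longrightarrow> j < NN n \<Longrightarrow> j < off n + 3*n \<or> off n + 4*n \<le> j \<Longrightarrow> S$$(off n + (3*n+r), j) = 0"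
  and SS: "S * Si = 1\<^sub>m (NN n)"
  shows "Ablk n S * Ablk n Si = 1\<^sub>m n"
proof (rule eq_matI)
  fix r c assume "r < dim_row (1\<^sub>m n :: 'a mat)" "c < dim_col (1\<^sub>m n :: 'a mat)"
  hence r: "r < n" and c: "c < n" by auto
  have i3: "off n + (3*n+r) < NN n" "off n + (3*n+c) < NN n" using idx_N[of 3 _ n] r c by auto
  let ?g = "\<lambda>k. S$$(off n + (3*n+r), k) * Si$$(k, off n + (3*n+c))"
  have NNe: "NN n = (off n + 3*n) + (n + n)" by (simp add: off_def)
  have "(S * Si)$$(off n + (3*n+r), off n + (3*n+c)) = (\<Sum>k<NN n. ?g k)"
    using mult_index[OF S Si i3] .
  also have "\<dots> = (\<Sum>k<off n + 3*n. ?g k) + (\<Sum>k<n. ?g (off n + 3*n + k)) + (\<Sum>k<n. ?g (off n + 3*n + (n + k)))"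
    unfolding NNe sum_split by (simp add: add.assoc)
  also have "(\<Sum>k<off n + 3*n. ?g k) = 0" using Z[OF r] by (intro sum.neutral) (auto simp: off_def)
  also have "(\<Sum>k<n. ?g (off n + 3*n + (n + k))) = 0" using Z[OF r] by (intro sum.neutral) (auto simp: off_def)
  also have "(\<Sum>k<n. ?g (off n + 3*n + k)) = (\<Sum>k<n. Ablk n S $$ (r,k) * Ablk n Si $$ (k,c))"
    using r c by (intro sum.cong) (auto simp: Ablk_def add.assoc)
  finally have "(\<Sum>k<n. Ablk n S $$ (r,k) * Ablk n Si $$ (k,c)) = 1\<^sub>m (NN n) $$ (off n + (3*n+r), off n + (3*n+c))"
    unfolding SS by simp
  also have "\<dots> = 1\<^sub>m n $$ (r,c)" using i3 r c by simp
  finally show "(Ablk n S * Ablk n Si) $$ (r,c) = 1\<^sub>m n $$ (r,c)"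
    by (subst mult_index[OF Ablk_carrier Ablk_carrier r c])
qed auto


lemma kd_dsum: assumes "A \<in> carrier_mat a a" "B \<in> carrier_mat b b"
  shows "kernel.dim (a+b) (dsum A B) = kernel.dim a (A::'a::field mat) + kernel.dim b B"
  by (rule kernel_four_block_0_mat[OF _ assms]) (use assms in \<open>auto simp: dsum_def\<close>)

lemma kd_zero: "kernel.dim k (0\<^sub>m k k :: 'a::field mat) = k"
proof -
  interpret kernel k k "0\<^sub>m k k :: 'a mat" by unfold_locales auto
  have "mat_kernel (0\<^sub>m k k :: 'a mat) = carrier_vec k" unfolding mat_kernel_def by auto
  hence "NC.V\<lparr>carrier := mat_kernel (0\<^sub>m k k)\<rparr> = NC.V" by simp
  thus ?thesis using NC.dim_is_n by simp
qed

lemma kd_one: "kernel.dim k (1\<^sub>m k :: 'a::field mat) = 0"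
  by (rule kernel_one_mat)

lemma mat_kernel_one: "mat_kernel (1\<^sub>m k :: 'a::field mat) = {0\<^sub>v k}"
  unfolding mat_kernel_def by auto

lemma kd_triv: fixes A :: "'a::field mat" assumes "mat_kernel A = {0\<^sub>v k}" shows "kernel.dim k A = 0"
proof -
  have "kernel.dim k A = kernel.dim k (1\<^sub>m k :: 'a mat)" using assms mat_kernel_one[of k, where 'a='a] by simp
  thus ?thesis using kd_one[of k, where 'a='a] by simp
qed

lemma kd_smult_one: "kernel.dim k (c \<cdot>\<^sub>m 1\<^sub>m k :: 'a::field mat) = (if c = 0 then k else 0)"
proof (cases "c = 0")
  case True
  have "c \<cdot>\<^sub>m 1\<^sub>m k = (0\<^sub>m k k :: 'a mat)" using True by (intro eq_matI) auto
  thus ?thesis using True kd_zero by simp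
next
  case False
  have "mat_kernel ((c \<cdot>\<^sub>m 1\<^sub>m k) * 1\<^sub>m k) = mat_kernel (1\<^sub>m k :: 'a mat)"
    by (rule mat_kernel_mult_eq[of _ k k _ "(1/c) \<cdot>\<^sub>m 1\<^sub>m k"]) (use False in auto)
  hence "mat_kernel (c \<cdot>\<^sub>m 1\<^sub>m k :: 'a mat) = {0\<^sub>v k}" using mat_kernel_one by simp
  hence "kernel.dim k (c \<cdot>\<^sub>m 1\<^sub>m k :: 'a mat) = 0" by (rule kd_triv)
  thus ?thesis using False by simp
qed

lemma kd_le: "A \<in> carrier_mat k k \<Longrightarrow> kernel.dim k (A :: 'a::field mat) \<le> k"
  using kernel_dim_code[of A] unfolding kernel_dim_def by simp

lemma kd_sim: assumes "M \<in> carrier_mat k k" "M' \<in> carrier_mat k k" "S \<in> carrier_mat k k" "Si \<in> carrier_mat k k"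
  "S * Si = 1\<^sub>m k" "Si * S = 1\<^sub>m k" "Si * M * S = M'"
  shows "kernel.dim k (M :: 'a::field mat) = kernel.dim k M'"
proof -
  have "similar_mat_wit M' M Si S" unfolding similar_mat_wit_def Let_def using assms by auto
  from similar_mat_wit_kernel_dim[OF assms(2) this] show ?thesis by simp
qed

lemma sum2_lin3: "(\<Sum>q<(P::nat). \<Sum>c<(R::nat). a * g1 q c + b * g2 q c + d * g3 q c) =
  a * (\<Sum>q<P. \<Sum>c<R. g1 q c) + b * (\<Sum>q<P. \<Sum>c<R. g2 q c) + d * (\<Sum>q<P. \<Sum>c<R. (g3 q c :: 'a::comm_ring_1))"
  by (simp add: sum.distrib sum_distrib_left)

abbreviation Wm :: "nat \<Rightarrow> 'a::comm_ring_1 \<Rightarrow> 'a mat \<Rightarrow> 'a mat \<Rightarrow> 'a \<Rightarrow> 'a \<Rightarrow> 'a \<Rightarrow> 'a mat" where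
  "Wm n lam X Y a b c \<equiv> a \<cdot>\<^sub>m Lm n lam + b \<cdot>\<^sub>m Kmat n X Y + c \<cdot>\<^sub>m 1\<^sub>m (5*n)"

lemma Wm_carrier: "Wm n lam X Y a b c \<in> carrier_mat (5*n) (5*n)" by simp

lemma Wm_index: "p < 5 \<Longrightarrow> q < 5 \<Longrightarrow> r < n \<Longrightarrow> c' < n \<Longrightarrow>
  Wm n lam X Y a b c $$ (p*n+r, q*n+c') = a * lf lam p q r c' + b * kf X Y p q r c' + c * (if p = q \<and> r = c' then 1 else 0)"
  using idx_lt[of p 5 r n] idx_lt[of q 5 c' n] idx_eq[of r n c' p q] Lm_index[of p q r n c' lam] Kmat_index[of p q r n c' X Y]
  by simp

lemma Wm_row: assumes v: "v \<in> carrier_vec (5*n)" and a: "p < 5" "r < n"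
  shows "(Wm n lam X Y a b c *\<^sub>v v) $ (p*n+r) = (a*lam + c) * v$(p*n+r) + a * (if p < 3 then v$((p+1)*n+r) else 0)
    + b * (if p = 0 then (\<Sum>c<n. X$$(r,c) * v$(2*n+c)) + (\<Sum>c<n. Y$$(r,c) * v$(4*n+c))
     else if p = 1 then (\<Sum>c<n. X$$(r,c) * v$(3*n+c)) else if p = 4 then v$(3*n+r) else 0)"
proof -
  let ?f = "\<lambda>q c. v$(q*n+c)"
  have "(Wm n lam X Y a b c *\<^sub>v v) $ (p*n+r) = (\<Sum>k<5*n. Wm n lam X Y a b c $$ (p*n+r, k) * v$k)"
    by (rule mulv_index[OF Wm_carrier v idx_lt[OF a]])
  also have "\<dots> = (\<Sum>q<5. \<Sum>c'<n. Wm n lam X Y a b c $$ (p*n+r, q*n+c') * v$(q*n+c'))" by (rule sum_blocks)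
  also have "\<dots> = (\<Sum>q<5. \<Sum>c'<n. a * (lf lam p q r c' * ?f q c') + b * (kf X Y p q r c' * ?f q c') + c * ((if p = q \<and> r = c' then 1 else 0) * ?f q c'))"
  proof (intro sum.cong refl)
    fix q c' :: nat assume q: "q \<in> {..<5}" and c': "c' \<in> {..<n}"
    show "Wm n lam X Y a b c $$ (p*n+r, q*n+c') * v$(q*n+c') = a * (lf lam p q r c' * ?f q c') + b * (kf X Y p q r c' * ?f q c') + c * ((if p = q \<and> r = c' then 1 else 0) * ?f q c')"
      using Wm_index[where p=p and q=q and r=r and n=n and c'=c' and lam=lam and X=X and Y=Y and a=a and b=b and c=c] a q c' by (simp add: algebra_simps)
  qed
  also have "\<dots> = a * (\<Sum>q<5. \<Sum>c'<n. lf lam p q r c' * ?f q c') + b * (\<Sum>q<5. \<Sum>c'<n. kf X Y p q r c' * ?f q c')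
     + c * (\<Sum>q<5. \<Sum>c'<n. (if p = q \<and> r = c' then 1 else 0) * ?f q c')" by (rule sum2_lin3)
  also have "(\<Sum>q<5. \<Sum>c'<n. (if p = q \<and> r = c' then 1 else 0) * ?f q c') = ?f p r"
    using a by (subst sum2_single[of p _ r]) auto
  also note lf_rowsum[OF a, where f = ?f]
  also note kf_rowsum[OF a, where f = ?f]
  finally show ?thesis by (simp add: algebra_simps)
qed

lemma Wm_kernel: fixes lam a b c :: "'a::field"
  assumes d: "a*lam + c \<noteq> 0"
  shows "mat_kernel (Wm n lam X Y a b c) = {0\<^sub>v (5*n)}"
proof -
  { fix v assume v: "v \<in> carrier_vec (5*n)" and z: "Wm n lam X Y a b c *\<^sub>v v = 0\<^sub>v (5*n)"
    have e: "(Wm n lam X Y a b c *\<^sub>v v) $ (p*n+r) = 0" if "p < 5" "r < n" for p r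
      using z idx_lt[OF that] by simp
    have R: "(a*lam + c) * v$(p*n+r) + a * (if p < 3 then v$((p+1)*n+r) else 0)
    + b * (if p = 0 then (\<Sum>c<n. X$$(r,c) * v$(2*n+c)) + (\<Sum>c<n. Y$$(r,c) * v$(4*n+c))
     else if p = 1 then (\<Sum>c<n. X$$(r,c) * v$(3*n+c)) else if p = 4 then v$(3*n+r) else 0) = 0" if "p < 5" "r < n" for p r
      using e[OF that] unfolding Wm_row[OF v that] .
    have 3: "v$(3*n+r) = 0" if r: "r<n" for r using R[of 3 r] r d by simp
    have 2: "v$(2*n+r) = 0" if r: "r<n" for r using R[of 2 r] r d 3[OF r] by simp
    have 4: "v$(4*n+r) = 0" if r: "r<n" for r using R[of 4 r] r d 3[OF r] by simp
    have 1: "v$(n+r) = 0" if r: "r<n" for r using R[of 1 r] r d 2[OF r] 3 by (simp add: mult_2)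
    have 0: "v$(r) = 0" if r: "r<n" for r using R[of 0 r] r d 1[OF r] 2 4 by simp
    have "v = 0\<^sub>v (5*n)"
    proof (rule eq_vecI)
      fix i assume "i < dim_vec (0\<^sub>v (5*n) :: 'a vec)"
      hence i: "i < 5*n" by simp
      hence n: "0 < n" by (cases n) auto
      have q: "i div n < 5" using i by (simp add: less_mult_imp_div_less)
      define qq where "qq = i div n"
      have ie: "i = qq*n + i mod n" unfolding qq_def by simp
      have rn: "i mod n < n" using n by simp
      have "v$(qq*n + i mod n) = 0"
        using less5_cases[OF q[folded qq_def]] 0[OF rn] 1[OF rn] 2[OF rn] 3[OF rn] 4[OF rn]
        by (elim disjE) (simp_all add: mult_2)
      hence "v$i = 0" using ie by simp
      thus "v$i = 0\<^sub>v (5*n) $ i" using i by simp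
    qed (use v in auto)
  }
  thus ?thesis unfolding mat_kernel_def by auto
qed



lemma one_dsum: "1\<^sub>m (a+b) = dsum (1\<^sub>m a) (1\<^sub>m b :: 'a::semiring_1 mat)"
  by (intro eq_matI) (auto simp: dsum_index)

lemma smult_dsum: "c \<cdot>\<^sub>m dsum A B = dsum (c \<cdot>\<^sub>m A) (c \<cdot>\<^sub>m (B :: 'a::semiring_1 mat))"
  by (intro eq_matI) (auto simp: dsum_index)

lemma add_dsum: assumes "A \<in> carrier_mat a a" "C \<in> carrier_mat a a" "B \<in> carrier_mat b b" "D \<in> carrier_mat b b"
  shows "dsum A B + dsum C D = dsum (A + C) (B + (D :: 'a::semiring_1 mat))"
  by (intro eq_matI) (use assms in \<open>auto simp: dsum_index\<close>)

lemma mult_dsum: assumes "A \<in> carrier_mat a a" "C \<in> carrier_mat a a" "B \<in> carrier_mat b b" "D \<in> carrier_mat b b"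
  shows "dsum A B * dsum C D = dsum (A * C) (B * (D :: 'a::semiring_1 mat))"
proof -
  have e: "dsum X Y = four_block_mat X (0\<^sub>m a b) (0\<^sub>m b a) Y" if "X \<in> carrier_mat a a" "Y \<in> carrier_mat b b" for X Y :: "'a mat"
    using that by (simp add: dsum_def)
  show ?thesis
    unfolding e[OF assms(1,3)] e[OF assms(2,4)] e[OF mult_carrier_mat[OF assms(1,2)] mult_carrier_mat[OF assms(3,4)]]
    by (subst mult_four_block_mat[OF assms(1) zero_carrier_mat zero_carrier_mat assms(3) assms(2) zero_carrier_mat zero_carrier_mat assms(4)])
      (use assms in auto)
qed

definition Dg :: "nat \<Rightarrow> 'a::semiring_1 \<Rightarrow> 'a \<Rightarrow> 'a \<Rightarrow> 'a mat \<Rightarrow> 'a mat" where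
  "Dg m x y z W = dsum (x \<cdot>\<^sub>m 1\<^sub>m (2*m+2)) (dsum (y \<cdot>\<^sub>m 1\<^sub>m (3*m+3)) (dsum (z \<cdot>\<^sub>m 1\<^sub>m (m+1)) W))"

lemma N_split: "7*m+6 = (2*m+2) + ((3*m+3) + ((m+1) + (m::nat)))" by simp

lemma Dg_carrier': "W \<in> carrier_mat m m \<Longrightarrow> Dg m x y z W \<in> carrier_mat ((2*m+2) + ((3*m+3) + ((m+1) + m))) ((2*m+2) + ((3*m+3) + ((m+1) + m)))"
  unfolding Dg_def by (intro dsum_carrier smult_carrier_mat one_carrier_mat)

lemma Dg_carrier: "W \<in> carrier_mat m m \<Longrightarrow> Dg m x y z W \<in> carrier_mat (7*m+6) (7*m+6)"
  using Dg_carrier' by (simp only: N_split)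

lemma smult_one: "1 \<cdot>\<^sub>m A = (A :: 'a::semiring_1 mat)"
  by (intro eq_matI) auto
lemma smult_zero_one: "0 \<cdot>\<^sub>m 1\<^sub>m k = (0\<^sub>m k k :: 'a::semiring_1 mat)"
  by (intro eq_matI) auto

lemma sI_add: "x \<cdot>\<^sub>m 1\<^sub>m k + y \<cdot>\<^sub>m 1\<^sub>m k = (x+y) \<cdot>\<^sub>m (1\<^sub>m k :: 'a::semiring_1 mat)"
  by (intro eq_matI) (auto simp: distrib_right)
lemma sI_smult: "a \<cdot>\<^sub>m (x \<cdot>\<^sub>m 1\<^sub>m k) = (a*x) \<cdot>\<^sub>m (1\<^sub>m k :: 'a::semiring_1 mat)"
  by (intro eq_matI) (auto simp: mult.assoc)
lemma sI_mult: "(x \<cdot>\<^sub>m 1\<^sub>m k) * (y \<cdot>\<^sub>m 1\<^sub>m k) = (x*y) \<cdot>\<^sub>m (1\<^sub>m k :: 'a::comm_semiring_1 mat)"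
proof -
  have "(x \<cdot>\<^sub>m 1\<^sub>m k) * (y \<cdot>\<^sub>m 1\<^sub>m k) = x \<cdot>\<^sub>m (1\<^sub>m k * (y \<cdot>\<^sub>m (1\<^sub>m k :: 'a mat)))"
    by (rule mult_smult_assoc_mat) auto
  also have "\<dots> = x \<cdot>\<^sub>m (y \<cdot>\<^sub>m 1\<^sub>m k)" by simp
  finally show ?thesis by (simp add: sI_smult)
qed

lemma M1_Dg: "A \<in> carrier_mat m m \<Longrightarrow> M1 A = Dg m 1 0 1 A"
  unfolding M1_def Dg_def Let_def by (simp add: smult_one smult_zero_one)

lemma M2_Dg: "A \<in> carrier_mat m m \<Longrightarrow> M2 lam A = Dg m 0 1 lam A"
  unfolding M2_def Dg_def Let_def by (simp add: smult_one smult_zero_one)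

lemma one_Dg: "1\<^sub>m (7*m+6) = Dg m 1 1 1 (1\<^sub>m m :: 'a::semiring_1 mat)"
  unfolding Dg_def smult_one one_dsum[symmetric] by (simp only: N_split)

lemma smult_Dg: "a \<cdot>\<^sub>m Dg m x y z W = Dg m (a*x) (a*y) (a*z) (a \<cdot>\<^sub>m W)"
  unfolding Dg_def by (simp add: smult_dsum sI_smult)

lemma add_Dg: assumes W: "W \<in> carrier_mat m m" "W' \<in> carrier_mat m m"
  shows "Dg m x y z W + Dg m x' y' z' W' = Dg m (x+x') (y+y') (z+z') (W + W')"
proof -
  have c: "\<And>x. x \<cdot>\<^sub>m 1\<^sub>m k \<in> carrier_mat k k" for k by simp
  show ?thesis unfolding Dg_def
    by (subst add_dsum[OF c c dsum_carrier[OF c dsum_carrier[OF c W(1)]] dsum_carrier[OF c dsum_carrier[OF c W(2)]]],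
        subst add_dsum[OF c c dsum_carrier[OF c W(1)] dsum_carrier[OF c W(2)]],
        subst add_dsum[OF c c W], simp add: sI_add)
qed

lemma mult_Dg: assumes W: "W \<in> carrier_mat m m" "W' \<in> carrier_mat m m"
  shows "Dg m x y z W * Dg m x' y' z' W' = Dg m (x*x') (y*y') (z*z') (W * (W' :: 'a::comm_semiring_1 mat))"
proof -
  have c: "\<And>x. x \<cdot>\<^sub>m 1\<^sub>m k \<in> carrier_mat k k" for k by simp
  show ?thesis unfolding Dg_def
    by (subst mult_dsum[OF c c dsum_carrier[OF c dsum_carrier[OF c W(1)]] dsum_carrier[OF c dsum_carrier[OF c W(2)]]],
        subst mult_dsum[OF c c dsum_carrier[OF c W(1)] dsum_carrier[OF c W(2)]],
        subst mult_dsum[OF c c W], simp add: sI_mult)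
qed

definition nz :: "'a::zero \<Rightarrow> nat \<Rightarrow> nat" where "nz x k = (if x = 0 then k else 0)"

lemma kd_Dg: assumes W: "W \<in> carrier_mat m m"
  shows "kernel.dim (7*m+6) (Dg m x y z (W :: 'a::field mat)) = nz x (2*m+2) + nz y (3*m+3) + nz z (m+1) + kernel.dim m W"
proof -
  have c: "\<And>x. x \<cdot>\<^sub>m 1\<^sub>m k \<in> carrier_mat k k" for k by simp
  have "kernel.dim ((2*m+2) + ((3*m+3) + ((m+1) + m))) (Dg m x y z W) = nz x (2*m+2) + nz y (3*m+3) + nz z (m+1) + kernel.dim m W"
    unfolding Dg_def
    by (subst kd_dsum[OF c dsum_carrier[OF c dsum_carrier[OF c W]]],
        subst kd_dsum[OF c dsum_carrier[OF c W]],
        subst kd_dsum[OF c W], simp add: kd_smult_one nz_def)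
  thus ?thesis by (simp only: N_split)
qed

lemma det_dsum: "A \<in> carrier_mat a a \<Longrightarrow> B \<in> carrier_mat b b \<Longrightarrow> det (dsum A B) = det A * det (B :: 'a::idom mat)"
  unfolding dsum_def by (rule det_four_block_mat_lower_left_zero) auto

lemma det_Dg: assumes W: "W \<in> carrier_mat m m"
  shows "det (Dg m x y z (W :: 'a::idom mat)) = x^(2*m+2) * y^(3*m+3) * z^(m+1) * det W"
proof -
  have c: "\<And>x. x \<cdot>\<^sub>m 1\<^sub>m k \<in> carrier_mat k k" for k by simp
  show ?thesis unfolding Dg_def
    by (subst det_dsum[OF c dsum_carrier[OF c dsum_carrier[OF c W]]],
        subst det_dsum[OF c dsum_carrier[OF c W]],
        subst det_dsum[OF c W], simp)
qed



lemma eq_blocks5I: assumes "A \<in> carrier_mat (5*n) (5*n)" "B \<in> carrier_mat (5*n) (5*n)"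
  and "\<And>p q r c. p < 5 \<Longrightarrow> q < 5 \<Longrightarrow> r < n \<Longrightarrow> c < n \<Longrightarrow> A$$(p*n+r, q*n+c) = B$$(p*n+r, q*n+c)"
  shows "A = B"
proof (rule eq_matI)
  fix i j assume "i < dim_row B" "j < dim_col B"
  hence i: "i < 5*n" and j: "j < 5*n" using assms by auto
  hence n: "0 < n" by (cases n) auto
  have "A$$((i div n)*n + i mod n, (j div n)*n + j mod n) = B$$((i div n)*n + i mod n, (j div n)*n + j mod n)"
    using assms(3)[of "i div n" "j div n" "i mod n" "j mod n"] i j n by (simp add: less_mult_imp_div_less)
  thus "A$$(i,j) = B$$(i,j)" by simp
qed (use assms in auto)

lemma bmult: assumes "A \<in> carrier_mat (5*n) (5*n)" "B \<in> carrier_mat (5*n) (5*n)"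
  and a: "p < 5" "q < 5" "r < n" "c < n"
  shows "(A*B)$$(p*n+r, q*n+c) = (\<Sum>q'<5. \<Sum>c'<n. A$$(p*n+r, q'*n+c') * B$$(q'*n+c', q*n+c))"
  using mult_index[OF assms(1,2) idx_lt[OF a(1,3)] idx_lt[OF a(2,4)]] sum_blocks[of _ 5 n] by simp

definition D5 :: "nat \<Rightarrow> 'a::semiring_1 mat \<Rightarrow> 'a mat" where
  "D5 n A = blocks5 n (\<lambda>p q. if p = q then A else 0\<^sub>m n n)"

lemma D5_carrier[simp]: "D5 n A \<in> carrier_mat (5*n) (5*n)" unfolding D5_def by simp

lemma D5_index: "p < 5 \<Longrightarrow> q < 5 \<Longrightarrow> r < n \<Longrightarrow> c < n \<Longrightarrow> D5 n A $$ (p*n+r, q*n+c) = (if p = q then A$$(r,c) else 0)"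
  unfolding D5_def by (simp add: blocks5_index)

lemma D5_left: fixes A :: "'a::comm_ring_1 mat"
  assumes A: "A \<in> carrier_mat n n" and f: "\<And>p q. f p q \<in> carrier_mat n n"
  shows "D5 n A * blocks5 n f = blocks5 n (\<lambda>p q. A * f p q)"
proof (rule eq_blocks5I)
  fix p q r c assume a: "p < (5::nat)" "q < (5::nat)" "r < n" "c < n"
  have "(D5 n A * blocks5 n f)$$(p*n+r, q*n+c) = (\<Sum>q'<5. \<Sum>c'<n. D5 n A$$(p*n+r, q'*n+c') * blocks5 n f$$(q'*n+c', q*n+c))"
    by (rule bmult) (use a in auto)
  also have "\<dots> = (\<Sum>q'<5. \<Sum>c'<n. (if p = q' then A$$(r,c') * f q' q $$(c',c) else 0))"
    using a by (intro sum.cong refl) (auto simp: D5_index blocks5_index)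
  also have "\<dots> = (\<Sum>c'<n. A$$(r,c') * f p q $$(c',c))"
    using a by (subst sum_single[of p]) auto
  also have "\<dots> = (A * f p q)$$(r,c)" using mult_index[OF A f a(3,4)] by simp
  also have "\<dots> = blocks5 n (\<lambda>p q. A * f p q) $$ (p*n+r, q*n+c)" using a by (simp add: blocks5_index)
  finally show "(D5 n A * blocks5 n f)$$(p*n+r, q*n+c) = blocks5 n (\<lambda>p q. A * f p q) $$ (p*n+r, q*n+c)" .
qed (use mult_carrier_mat[OF D5_carrier blocks5_carrier] in auto)

lemma D5_right: fixes A :: "'a::comm_ring_1 mat"
  assumes A: "A \<in> carrier_mat n n" and f: "\<And>p q. f p q \<in> carrier_mat n n"
  shows "blocks5 n f * D5 n A = blocks5 n (\<lambda>p q. f p q * A)"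
proof (rule eq_blocks5I)
  fix p q r c assume a: "p < (5::nat)" "q < (5::nat)" "r < n" "c < n"
  have "(blocks5 n f * D5 n A)$$(p*n+r, q*n+c) = (\<Sum>q'<5. \<Sum>c'<n. blocks5 n f$$(p*n+r, q'*n+c') * D5 n A$$(q'*n+c', q*n+c))"
    by (rule bmult) (use a in auto)
  also have "\<dots> = (\<Sum>q'<5. \<Sum>c'<n. (if q' = q then f p q $$(r,c') * A$$(c',c) else 0))"
    using a by (intro sum.cong refl) (auto simp: D5_index blocks5_index)
  also have "\<dots> = (\<Sum>c'<n. f p q $$(r,c') * A$$(c',c))"
    using a by (subst sum_single[of q]) auto
  also have "\<dots> = (f p q * A)$$(r,c)" using mult_index[OF f A a(3,4)] by simp
  also have "\<dots> = blocks5 n (\<lambda>p q. f p q * A) $$ (p*n+r, q*n+c)" using a by (simp add: blocks5_index)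
  finally show "(blocks5 n f * D5 n A)$$(p*n+r, q*n+c) = blocks5 n (\<lambda>p q. f p q * A) $$ (p*n+r, q*n+c)" .
qed (use mult_carrier_mat[OF blocks5_carrier D5_carrier] in auto)

lemma D5_mult: fixes A B :: "'a::comm_ring_1 mat"
  assumes A: "A \<in> carrier_mat n n" and B: "B \<in> carrier_mat n n"
  shows "D5 n A * D5 n B = D5 n (A * B)"
proof -
  have "D5 n A * D5 n B = blocks5 n (\<lambda>p q. A * (if p = q then B else 0\<^sub>m n n))"
    unfolding D5_def[of n B] by (rule D5_left[OF A]) (use B in auto)
  also have "(\<lambda>p q. A * (if p = q then B else 0\<^sub>m n n)) = (\<lambda>p q. if p = q then A * B else 0\<^sub>m n n)"
    using A by (auto intro!: ext)
  finally show ?thesis unfolding D5_def .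
qed

lemma D5_one: "D5 n (1\<^sub>m n) = (1\<^sub>m (5*n) :: 'a::comm_ring_1 mat)"
  by (rule eq_blocks5I) (auto simp: D5_index idx_lt idx_eq)

definition lsc :: "'a::semiring_1 \<Rightarrow> nat \<Rightarrow> nat \<Rightarrow> 'a" where
  "lsc lam p q = (if p=q then lam else 0) + (if q = Suc p \<and> p<3 then 1 else 0)"

lemma Lm_blocks: "Lm n lam = blocks5 n (\<lambda>p q. lsc lam p q \<cdot>\<^sub>m 1\<^sub>m n)"
  by (rule eq_blocks5I) (auto simp: Lm_index blocks5_index lf_def lsc_def)

lemma conj_L: fixes S Si :: "'a::comm_ring_1 mat"
  assumes S: "S \<in> carrier_mat n n" and Si: "Si \<in> carrier_mat n n" and e: "Si * S = 1\<^sub>m n"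
  shows "D5 n Si * Lm n lam * D5 n S = Lm n lam"
proof -
  have aux: "Si * (c \<cdot>\<^sub>m 1\<^sub>m n) * S = c \<cdot>\<^sub>m 1\<^sub>m n" for c
  proof -
    have "Si * (c \<cdot>\<^sub>m 1\<^sub>m n) = c \<cdot>\<^sub>m Si" using mult_smult_distrib[OF Si one_carrier_mat[of n], of c] Si by simp
    hence "Si * (c \<cdot>\<^sub>m 1\<^sub>m n) * S = c \<cdot>\<^sub>m (Si * S)" using mult_smult_assoc_mat[OF Si S] by simp
    thus ?thesis using e by simp
  qed
  have "D5 n Si * Lm n lam * D5 n S = blocks5 n (\<lambda>p q. Si * (lsc lam p q \<cdot>\<^sub>m 1\<^sub>m n) * S)"
    unfolding Lm_blocks by (subst D5_left[OF Si], simp, subst D5_right[OF S], use Si in auto)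
  also have "(\<lambda>p q. Si * (lsc lam p q \<cdot>\<^sub>m 1\<^sub>m n) * S) = (\<lambda>p q. lsc lam p q \<cdot>\<^sub>m 1\<^sub>m n)"
    using aux by (auto intro!: ext)
  finally show ?thesis unfolding Lm_blocks .
qed

lemma conj_K: fixes S Si :: "'a::comm_ring_1 mat"
  assumes S: "S \<in> carrier_mat n n" and Si: "Si \<in> carrier_mat n n" and e: "Si * S = 1\<^sub>m n"
  and X: "X \<in> carrier_mat n n" and Y: "Y \<in> carrier_mat n n"
  shows "D5 n Si * Kmat n X Y * D5 n S = Kmat n (Si * X * S) (Si * Y * S)"
proof -
  let ?f = "\<lambda>X Y p q. if (p,q) = (0,2) then X
      else if (p,q) = (0,4) then Y
      else if (p,q) = (1,3) then X
      else if (p,q) = (4,3) then 1\<^sub>m n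
      else 0\<^sub>m n n"
  have "D5 n Si * Kmat n X Y * D5 n S = blocks5 n (\<lambda>p q. Si * ?f X Y p q * S)"
    unfolding Kmat_def by (subst D5_left[OF Si], use X Y in simp, subst D5_right[OF S], use Si X Y in auto)
  also have "(\<lambda>p q. Si * ?f X Y p q * S) = ?f (Si * X * S) (Si * Y * S)"
    using S Si e by (auto intro!: ext)
  finally show ?thesis unfolding Kmat_def .
qed

lemma LK_comm: "Lm n lam * Kmat n X Y = Kmat n X Y * (Lm n lam :: 'a::comm_ring_1 mat)"
proof (rule eq_blocks5I)
  fix p q r c assume a: "p < (5::nat)" "q < (5::nat)" "r < n" "c < n"
  have "(Lm n lam * Kmat n X Y)$$(p*n+r, q*n+c) = (\<Sum>q'<5. \<Sum>c'<n. lf lam p q' r c' * kf X Y q' q c' c)"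
    using a by (subst bmult) (auto intro!: sum.cong simp: Lm_index Kmat_index)
  also have "\<dots> = lam * kf X Y p q r c + (if p < 3 then kf X Y (Suc p) q r c else 0)"
    using lf_rowsum[OF a(1,3), where f = "\<lambda>q' c'. kf X Y q' q c' c"] by simp
  also have "\<dots> = lam * kf X Y p q r c + (if 1 \<le> q \<and> q \<le> 3 then kf X Y p (q-1) r c else 0)"
    using less5_cases[OF a(1)] less5_cases[OF a(2)] by (elim disjE) (auto simp: kf_def)
  also have "\<dots> = (\<Sum>p'<5. \<Sum>r'<n. kf X Y p p' r r' * lf lam p' q r' c)"
    using lf_colsum[OF a(2,4), where f = "\<lambda>p' r'. kf X Y p p' r r'"] by simp
  also have "\<dots> = (Kmat n X Y * Lm n lam)$$(p*n+r, q*n+c)"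
    using a by (subst bmult) (auto intro!: sum.cong simp: Lm_index Kmat_index)
  finally show "(Lm n lam * Kmat n X Y)$$(p*n+r, q*n+c) = (Kmat n X Y * Lm n lam)$$(p*n+r, q*n+c)" .
qed auto



lemma comb_Dg: assumes W: "W \<in> carrier_mat m m" "W' \<in> carrier_mat m m"
  shows "a \<cdot>\<^sub>m Dg m x y z W + b \<cdot>\<^sub>m Dg m x' y' z' W' + c \<cdot>\<^sub>m 1\<^sub>m (7*m+6) =
    Dg m (a*x+b*x'+c) (a*y+b*y'+c) (a*z+b*z'+c) (a \<cdot>\<^sub>m W + b \<cdot>\<^sub>m W' + c \<cdot>\<^sub>m (1\<^sub>m m :: 'a::comm_semiring_1 mat))"
  unfolding one_Dg smult_Dg using W by (simp add: add_Dg)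

lemma kd_comb: fixes lam :: "'a::field"
  shows "kernel.dim (7*(5*n)+6) (a \<cdot>\<^sub>m M1 (Lm n lam) + b \<cdot>\<^sub>m M2 lam (Kmat n X Y) + c \<cdot>\<^sub>m 1\<^sub>m (7*(5*n)+6))
   = nz (a+c) (2*(5*n)+2) + nz (b+c) (3*(5*n)+3) + nz (a + b*lam + c) (5*n+1) + kernel.dim (5*n) (Wm n lam X Y a b c)"
proof -
  have L: "Lm n lam \<in> carrier_mat (5*n) (5*n)" and K: "Kmat n X Y \<in> carrier_mat (5*n) (5*n)" by simp_all
  show ?thesis unfolding M1_Dg[OF L] M2_Dg[OF K] comb_Dg[OF L K]
    by (subst kd_Dg) simp_all
qed

lemma Wm_kd_le: "kernel.dim (5*n) (Wm n lam X Y a b c) \<le> 5*n"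
  by (rule kd_le) simp

lemma Wm_kd_0: fixes lam :: "'a::field" shows "a*lam + c \<noteq> 0 \<Longrightarrow> kernel.dim (5*n) (Wm n lam X Y a b c) = 0"
  by (rule kd_triv, rule Wm_kernel)

lemma shift_sim: fixes M :: "'a::comm_ring_1 mat"
  assumes c: "M \<in> carrier_mat k k" "S \<in> carrier_mat k k" "Si \<in> carrier_mat k k" and e: "Si * S = 1\<^sub>m k"
  and E: "Si * M * S = M'"
  shows "Si * (M + c \<cdot>\<^sub>m 1\<^sub>m k) * S = M' + c \<cdot>\<^sub>m 1\<^sub>m k"
proof -
  have "Si * (M + c \<cdot>\<^sub>m 1\<^sub>m k) = Si * M + Si * (c \<cdot>\<^sub>m 1\<^sub>m k)"
    using c by (simp add: mult_add_distrib_mat)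
  also have "Si * (c \<cdot>\<^sub>m 1\<^sub>m k) = c \<cdot>\<^sub>m Si" using mult_smult_distrib[OF c(3) one_carrier_mat[of k], of c] c by simp
  finally have "Si * (M + c \<cdot>\<^sub>m 1\<^sub>m k) * S = (Si * M + c \<cdot>\<^sub>m Si) * S" by simp
  also have "\<dots> = Si * M * S + (c \<cdot>\<^sub>m Si) * S"
    by (rule add_mult_distrib_mat[OF mult_carrier_mat[OF c(3) c(1)] smult_carrier_mat[OF c(3)] c(2)])
  also have "(c \<cdot>\<^sub>m Si) * S = c \<cdot>\<^sub>m (Si * S)" using mult_smult_assoc_mat[OF c(3) c(2)] .
  finally show ?thesis using E e by simp
qed

lemma kd_shift: fixes M :: "'a::field mat"
  assumes c: "M \<in> carrier_mat k k" "M' \<in> carrier_mat k k" "S \<in> carrier_mat k k" "Si \<in> carrier_mat k k"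
  and e: "S * Si = 1\<^sub>m k" "Si * S = 1\<^sub>m k" and E: "Si * M * S = M'"
  shows "kernel.dim k (M + c \<cdot>\<^sub>m 1\<^sub>m k) = kernel.dim k (M' + c \<cdot>\<^sub>m 1\<^sub>m k)"
  by (rule kd_sim[OF _ _ c(3,4) e]) (use c shift_sim[OF c(1,3,4) e(2) E] in auto)

lemma lin_id: "A \<in> carrier_mat k k \<Longrightarrow> B \<in> carrier_mat k k \<Longrightarrow> A + c \<cdot>\<^sub>m 1\<^sub>m k = 1 \<cdot>\<^sub>m A + 0 \<cdot>\<^sub>m B + c \<cdot>\<^sub>m (1\<^sub>m k :: 'a::semiring_1 mat)"
  by (intro eq_matI) auto
lemma lin_id2: "A \<in> carrier_mat k k \<Longrightarrow> B \<in> carrier_mat k k \<Longrightarrow> A + c \<cdot>\<^sub>m 1\<^sub>m k = 0 \<cdot>\<^sub>m B + 1 \<cdot>\<^sub>m A + c \<cdot>\<^sub>m (1\<^sub>m k :: 'a::semiring_1 mat)"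
  by (intro eq_matI) auto
lemma lin_id0: "A \<in> carrier_mat k k \<Longrightarrow> A + 0 \<cdot>\<^sub>m 1\<^sub>m k = (A :: 'a::semiring_1 mat)"
  by (intro eq_matI) auto

definition Fk :: "'a::field \<Rightarrow> nat \<Rightarrow> ('a \<Rightarrow> 'a \<Rightarrow> 'a \<Rightarrow> nat) \<Rightarrow> 'a \<Rightarrow> 'a \<Rightarrow> 'a \<Rightarrow> nat" where
  "Fk lam m w a b c = nz (a+c) (2*m+2) + nz (b+c) (3*m+3) + nz (a + b*lam + c) (m+1) + w a b c"

lemma nz_le: "nz x k \<le> k" unfolding nz_def by simp

lemma coeffs: fixes lam al be ga de :: "'a::field"
  assumes lam: "lam \<noteq> 0" and det: "al * de - be * ga \<noteq> 0"
  and wle: "\<And>a b c. w a b c \<le> m" and w'le: "\<And>a b c. w' a b c \<le> m"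
  and w0: "\<And>a b c. a*lam + c \<noteq> 0 \<Longrightarrow> w a b c = 0" and w'0: "\<And>a b c. a*lam + c \<noteq> 0 \<Longrightarrow> w' a b c = 0"
  and K1: "\<And>c. Fk lam m w al be c = Fk lam m w 1 0 c"
  and K2: "\<And>c. Fk lam m w ga de c = Fk lam m w' 0 1 c"
  shows "al = 1 \<and> be = 0 \<and> ga = 0 \<and> de = 1"
proof -
  have r1: "Fk lam m w 1 0 0 = 3*m+3" unfolding Fk_def nz_def using w0[of 1 0 0] lam by simp
  have be: "be = 0"
  proof (rule ccontr)
    assume b: "be \<noteq> 0"
    show False
    proof (cases "al = 0")
      case True
      have "Fk lam m w al be 0 \<le> 3*m+2" unfolding Fk_def nz_def using True b lam wle[of al be 0] by simp
      thus False using K1[of 0] r1 by simp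
    next
      case False
      have "Fk lam m w al be 0 \<le> m+1" unfolding Fk_def nz_def using False b lam w0[of al 0 be] by simp
      thus False using K1[of 0] r1 by simp
    qed
  qed
  have r2: "Fk lam m w' 0 1 0 \<ge> 2*m+2" "Fk lam m w' 0 1 0 \<le> 3*m+2"
    unfolding Fk_def nz_def using lam w'le[of 0 1 0] by simp_all
  have ga: "ga = 0"
  proof (rule ccontr)
    assume g: "ga \<noteq> 0"
    show False
    proof (cases "de = 0")
      case True
      have "Fk lam m w ga de 0 = 3*m+3" unfolding Fk_def nz_def using True g lam w0[of ga 0 de] by simp
      thus False using K2[of 0] r2 by simp
    next
      case False
      have "Fk lam m w ga de 0 \<le> m+1" unfolding Fk_def nz_def using False g lam w0[of ga 0 de] by simp
      thus False using K2[of 0] r2 by simp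
    qed
  qed
  have al0: "al \<noteq> 0" and de0: "de \<noteq> 0" using det be ga by auto
  have al: "al = 1"
  proof (rule ccontr)
    assume a: "al \<noteq> 1"
    have "Fk lam m w 1 0 (-1) \<ge> 3*m+3" unfolding Fk_def nz_def by simp
    moreover have "Fk lam m w al 0 (-1) \<le> m" unfolding Fk_def nz_def using a wle[of al 0 "-1"] by simp
    ultimately show False using K1[of "-1"] be by simp
  qed
  have de: "de = 1"
  proof (rule ccontr)
    assume d: "de \<noteq> 1"
    have "Fk lam m w' 0 1 (-1) \<ge> 3*m+3" unfolding Fk_def nz_def by simp
    moreover have "Fk lam m w 0 de (-1) \<le> m+1" unfolding Fk_def nz_def using d w0[of 0 "-1" de] by simp
    ultimately show False using K2[of "-1"] ga by simp
  qed
  show ?thesis using al be ga de by simp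
qed



lemma comm_part: "M1 (Lm n lam) * M2 lam (Kmat n X Y) = M2 lam (Kmat n X Y) * M1 (Lm n (lam :: 'a::comm_ring_1))"
proof -
  have L: "Lm n lam \<in> carrier_mat (5*n) (5*n)" and K: "Kmat n X Y \<in> carrier_mat (5*n) (5*n)" by simp_all
  show ?thesis unfolding M1_Dg[OF L] M2_Dg[OF K] mult_Dg[OF L K] mult_Dg[OF K L] LK_comm by simp
qed

lemma det_inv: assumes A: "A \<in> carrier_mat k k" and d: "det A \<noteq> (0 :: 'a::field)"
  shows "invertible_mat A"
proof -
  from det_non_zero_imp_unit[OF A d, of "()"]
  obtain B where B: "B \<in> carrier_mat k k" "B * A = 1\<^sub>m k" "A * B = 1\<^sub>m k"
    unfolding Units_def by (auto simp: ring_mat_simps)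
  thus ?thesis unfolding invertible_mat_def inverts_mat_def using A by (auto intro!: exI[of _ B])
qed

lemma inv_part: fixes lam :: "'a::field" assumes lam: "lam \<noteq> 0" "lam \<noteq> -1"
  shows "invertible_mat (M1 (Lm n lam) + M2 lam (Kmat n X Y))"
proof -
  have L: "Lm n lam \<in> carrier_mat (5*n) (5*n)" and K: "Kmat n X Y \<in> carrier_mat (5*n) (5*n)" by simp_all
  have LK: "Lm n lam + Kmat n X Y \<in> carrier_mat (5*n) (5*n)" by simp
  have e: "Lm n lam + Kmat n X Y = Wm n lam X Y 1 1 0" by (intro eq_matI) auto
  have ker: "mat_kernel (Lm n lam + Kmat n X Y) = {0\<^sub>v (5*n)}" unfolding e using lam by (intro Wm_kernel) simp
  have dW: "det (Lm n lam + Kmat n X Y) \<noteq> 0"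
  proof
    assume "det (Lm n lam + Kmat n X Y) = 0"
    from this[unfolded det_0_iff_vec_prod_zero_field[OF LK]]
    obtain v where "v \<in> carrier_vec (5*n)" "v \<noteq> 0\<^sub>v (5*n)" "(Lm n lam + Kmat n X Y) *\<^sub>v v = 0\<^sub>v (5*n)" by auto
    hence "v \<in> mat_kernel (Lm n lam + Kmat n X Y)" by (intro mat_kernelI[OF LK])
    thus False using ker \<open>v \<noteq> 0\<^sub>v (5*n)\<close> by simp
  qed
  have s: "M1 (Lm n lam) + M2 lam (Kmat n X Y) = Dg (5*n) 1 1 (1+lam) (Lm n lam + Kmat n X Y)"
    unfolding M1_Dg[OF L] M2_Dg[OF K] add_Dg[OF L K] by simp
  have "lam + 1 \<noteq> 0" using lam(2) by (metis add.commute add_eq_0_iff)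
  hence "det (M1 (Lm n lam) + M2 lam (Kmat n X Y)) \<noteq> 0" unfolding s det_Dg[OF LK]
    using dW by (simp add: add.commute)
  moreover have C: "M1 (Lm n lam) + M2 lam (Kmat n X Y) \<in> carrier_mat (7*(5*n)+6) (7*(5*n)+6)"
    using M1_carrier[OF L] M2_carrier[OF K] by simp
  ultimately show ?thesis using det_inv[OF C] by blast
qed

lemma lin10: "A \<in> carrier_mat k k \<Longrightarrow> B \<in> carrier_mat k k \<Longrightarrow> 1 \<cdot>\<^sub>m A + 0 \<cdot>\<^sub>m B = (A :: 'a::semiring_1 mat)"
  by (intro eq_matI) auto
lemma lin01: "A \<in> carrier_mat k k \<Longrightarrow> B \<in> carrier_mat k k \<Longrightarrow> 0 \<cdot>\<^sub>m A + 1 \<cdot>\<^sub>m B = (B :: 'a::semiring_1 mat)"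
  by (intro eq_matI) auto

lemma fwd: fixes lam :: "'a::field"
  assumes X: "X \<in> carrier_mat n n" "Y \<in> carrier_mat n n"
  and ps: "pair_similar n (X, Y) (X', Y')"
  shows "pair_weakly_similar (7*(5*n) + 6)
             (M1 (Lm n lam), M2 lam (Kmat n X Y))
             (M1 (Lm n lam), M2 lam (Kmat n X' Y'))"
proof -
  from ps obtain S0 Si0 where S0: "S0 \<in> carrier_mat n n" and Si0: "Si0 \<in> carrier_mat n n"
    and e1: "S0 * Si0 = 1\<^sub>m n" and e2: "Si0 * S0 = 1\<^sub>m n" and eX: "Si0 * X * S0 = X'" and eY: "Si0 * Y * S0 = Y'"
    unfolding pair_similar_def by auto
  have L: "Lm n lam \<in> carrier_mat (5*n) (5*n)" and K: "Kmat n X Y \<in> carrier_mat (5*n) (5*n)" by simp_all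
  let ?S = "Dg (5*n) 1 1 1 (D5 n S0)" and ?Si = "Dg (5*n) 1 1 1 (D5 n Si0)"
  have SC: "?S \<in> carrier_mat (7*(5*n)+6) (7*(5*n)+6)" "?Si \<in> carrier_mat (7*(5*n)+6) (7*(5*n)+6)"
    by (rule Dg_carrier[OF D5_carrier])+
  have SS: "?S * ?Si = 1\<^sub>m (7*(5*n)+6)" "?Si * ?S = 1\<^sub>m (7*(5*n)+6)"
    unfolding mult_Dg[OF D5_carrier D5_carrier] D5_mult[OF S0 Si0] D5_mult[OF Si0 S0] e1 e2 one_Dg D5_one by simp_all
  have P: "?Si * (1 \<cdot>\<^sub>m M1 (Lm n lam) + 0 \<cdot>\<^sub>m M2 lam (Kmat n X Y)) * ?S = M1 (Lm n lam)"
  proof -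
    have e: "1 \<cdot>\<^sub>m M1 (Lm n lam) + 0 \<cdot>\<^sub>m M2 lam (Kmat n X Y) = M1 (Lm n lam)"
      using M1_carrier[OF L] M2_carrier[OF K] by (rule lin10)
    have "?Si * M1 (Lm n lam) * ?S = M1 (Lm n lam)"
      unfolding M1_Dg[OF L] mult_Dg[OF D5_carrier L] mult_Dg[OF mult_carrier_mat[OF D5_carrier L] D5_carrier]
      conj_L[OF S0 Si0 e2] by simp
    thus ?thesis unfolding e .
  qed
  have Q: "?Si * (0 \<cdot>\<^sub>m M1 (Lm n lam) + 1 \<cdot>\<^sub>m M2 lam (Kmat n X Y)) * ?S = M2 lam (Kmat n X' Y')"
  proof -
    have e: "0 \<cdot>\<^sub>m M1 (Lm n lam) + 1 \<cdot>\<^sub>m M2 lam (Kmat n X Y) = M2 lam (Kmat n X Y)"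
      using M1_carrier[OF L] M2_carrier[OF K] by (rule lin01)
    have "?Si * M2 lam (Kmat n X Y) * ?S = M2 lam (Kmat n X' Y')"
      unfolding M2_Dg[OF K] M2_Dg[OF Kmat_carrier] mult_Dg[OF D5_carrier K] mult_Dg[OF mult_carrier_mat[OF D5_carrier K] D5_carrier]
      conj_K[OF S0 Si0 e2 X] eX eY by simp
    thus ?thesis unfolding e .
  qed
  show ?thesis unfolding pair_weakly_similar_def
    by (rule exI[of _ ?S], rule exI[of _ ?Si], rule exI[of _ 1], rule exI[of _ 0], rule exI[of _ 0], rule exI[of _ 1])
      (use SC SS P Q in simp)
qed



lemma intertw: fixes A :: "'a::comm_ring_1 mat"
  assumes c: "A \<in> carrier_mat k k" "B \<in> carrier_mat k k" "S \<in> carrier_mat k k" "Si \<in> carrier_mat k k"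
  and e: "S * Si = 1\<^sub>m k" "Si * S = 1\<^sub>m k" and E: "Si * A * S = B"
  shows "A * S = S * B" "B * Si = Si * A"
proof -
  have "S * B = S * (Si * A * S)" using E by simp
  also have "\<dots> = (S * Si) * A * S" using c by (simp add: assoc_mult_mat[of _ k k _ k _ k])
  also have "\<dots> = A * S" using e c by simp
  finally show "A * S = S * B" by simp
  have "B * Si = (Si * A * S) * Si" using E by simp
  also have "\<dots> = Si * A * (S * Si)" using c by (simp add: assoc_mult_mat[of _ k k _ k _ k])
  also have "\<dots> = Si * A" using e c by simp
  finally show "B * Si = Si * A" .
qed

lemma bwd: fixes lam :: "'a::field"
  assumes lam: "lam \<noteq> 0"
  and X: "X \<in> carrier_mat n n" "Y \<in> carrier_mat n n" "X' \<in> carrier_mat n n" "Y' \<in> carrier_mat n n"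
  and pws: "pair_weakly_similar (7*(5*n) + 6)
             (M1 (Lm n lam), M2 lam (Kmat n X Y))
             (M1 (Lm n lam), M2 lam (Kmat n X' Y'))"
  shows "pair_similar n (X, Y) (X', Y')"
proof -
  let ?N = "7*(5*n)+6"
  let ?P = "M1 (Lm n lam)" and ?Q = "M2 lam (Kmat n X Y)" and ?Q' = "M2 lam (Kmat n X' Y')"
  from pws obtain S Si al be ga de where S: "S \<in> carrier_mat ?N ?N" and Si: "Si \<in> carrier_mat ?N ?N"
    and e1: "S * Si = 1\<^sub>m ?N" and e2: "Si * S = 1\<^sub>m ?N" and det: "al * de - be * ga \<noteq> 0"
    and E1: "Si * (al \<cdot>\<^sub>m ?P + be \<cdot>\<^sub>m ?Q) * S = ?P" and E2: "Si * (ga \<cdot>\<^sub>m ?P + de \<cdot>\<^sub>m ?Q) * S = ?Q'"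
    unfolding pair_weakly_similar_def by auto
  have L: "Lm n lam \<in> carrier_mat (5*n) (5*n)" and K: "Kmat n X Y \<in> carrier_mat (5*n) (5*n)"
    and K': "Kmat n X' Y' \<in> carrier_mat (5*n) (5*n)" by simp_all
  have P: "?P \<in> carrier_mat ?N ?N" and Q: "?Q \<in> carrier_mat ?N ?N" and Q': "?Q' \<in> carrier_mat ?N ?N"
    using M1_carrier[OF L] M2_carrier[OF K] M2_carrier[OF K'] by auto
  define w where "w a b c = kernel.dim (5*n) (Wm n lam X Y a b c)" for a b c
  define w' where "w' a b c = kernel.dim (5*n) (Wm n lam X' Y' a b c)" for a b c
  have kc: "kernel.dim ?N (a \<cdot>\<^sub>m ?P + b \<cdot>\<^sub>m ?Q + c \<cdot>\<^sub>m 1\<^sub>m ?N) = Fk lam (5*n) w a b c" for a b c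
    unfolding kd_comb Fk_def w_def by simp
  have kc': "kernel.dim ?N (a \<cdot>\<^sub>m ?P + b \<cdot>\<^sub>m ?Q' + c \<cdot>\<^sub>m 1\<^sub>m ?N) = Fk lam (5*n) w' a b c" for a b c
    unfolding kd_comb Fk_def w'_def by simp
  have K1: "Fk lam (5*n) w al be c = Fk lam (5*n) w 1 0 c" for c
  proof -
    have "kernel.dim ?N (al \<cdot>\<^sub>m ?P + be \<cdot>\<^sub>m ?Q + c \<cdot>\<^sub>m 1\<^sub>m ?N) = kernel.dim ?N (?P + c \<cdot>\<^sub>m 1\<^sub>m ?N)"
      by (rule kd_shift[OF _ P S Si e1 e2 E1]) (use P Q in simp)
    also have "?P + c \<cdot>\<^sub>m 1\<^sub>m ?N = 1 \<cdot>\<^sub>m ?P + 0 \<cdot>\<^sub>m ?Q + c \<cdot>\<^sub>m 1\<^sub>m ?N" by (rule lin_id[OF P Q])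
    finally show ?thesis unfolding kc .
  qed
  have K2: "Fk lam (5*n) w ga de c = Fk lam (5*n) w' 0 1 c" for c
  proof -
    have "kernel.dim ?N (ga \<cdot>\<^sub>m ?P + de \<cdot>\<^sub>m ?Q + c \<cdot>\<^sub>m 1\<^sub>m ?N) = kernel.dim ?N (?Q' + c \<cdot>\<^sub>m 1\<^sub>m ?N)"
      by (rule kd_shift[OF _ Q' S Si e1 e2 E2]) (use P Q in simp)
    also have "?Q' + c \<cdot>\<^sub>m 1\<^sub>m ?N = 0 \<cdot>\<^sub>m ?P + 1 \<cdot>\<^sub>m ?Q' + c \<cdot>\<^sub>m 1\<^sub>m ?N" by (rule lin_id2[OF Q' P])
    finally show ?thesis unfolding kc kc' .
  qed
  have co: "al = 1 \<and> be = 0 \<and> ga = 0 \<and> de = 1"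
  proof (rule coeffs[OF lam det _ _ _ _ K1 K2])
    show "w a b c \<le> 5*n" for a b c unfolding w_def by (rule Wm_kd_le)
    show "w' a b c \<le> 5*n" for a b c unfolding w'_def by (rule Wm_kd_le)
    show "a*lam + c \<noteq> 0 \<Longrightarrow> w a b c = 0" for a b c unfolding w_def by (rule Wm_kd_0)
    show "a*lam + c \<noteq> 0 \<Longrightarrow> w' a b c = 0" for a b c unfolding w'_def by (rule Wm_kd_0)
  qed
  have E1': "Si * ?P * S = ?P" using E1 co lin10[OF P Q] by simp
  have E2': "Si * ?Q * S = ?Q'" using E2 co lin01[OF P Q] by simp
  note I1 = intertw[OF P P S Si e1 e2 E1']
  note I2 = intertw[OF Q Q' S Si e1 e2 E2']
  have H1: "?P * S = S * ?P" using I1(1) .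
  have H2: "?Q * S = S * ?Q'" using I2(1) .
  have H1': "?P * Si = Si * ?P" using I1(2) by simp
  have H2': "?Q' * Si = Si * ?Q" using I2(2) .
  note XY = stepB_XY[OF S lam H1 H2 X(1) X(3) X(2) X(4)]
  have A1: "Ablk n S * Ablk n Si = 1\<^sub>m n"
    by (rule Ablk_mult[OF S Si _ e1], rule stepB_zero[OF S lam H1 H2])
  have A2: "Ablk n Si * Ablk n S = 1\<^sub>m n"
    by (rule Ablk_mult[OF Si S _ e2], rule stepB_zero[OF Si lam H1' H2'])
  have AC: "Ablk n S \<in> carrier_mat n n" "Ablk n Si \<in> carrier_mat n n" by simp_all
  have cX: "Ablk n Si * Z * Ablk n S = Z'" if Z: "Z \<in> carrier_mat n n" "Z' \<in> carrier_mat n n"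
    and e: "Z * Ablk n S = Ablk n S * Z'" for Z Z'
  proof -
    have "Ablk n Si * Z * Ablk n S = Ablk n Si * (Z * Ablk n S)" using Z AC by (simp add: assoc_mult_mat[of _ n n _ n _ n])
    also have "\<dots> = Ablk n Si * (Ablk n S * Z')" using e by simp
    also have "\<dots> = (Ablk n Si * Ablk n S) * Z'" using Z AC by (simp add: assoc_mult_mat[of _ n n _ n _ n])
    finally show ?thesis using A2 Z by simp
  qed
  show ?thesis unfolding pair_similar_def
    by (rule exI[of _ "Ablk n S"], rule exI[of _ "Ablk n Si"])
      (use AC A1 A2 cX[OF X(1) X(3) XY(1)] cX[OF X(2) X(4) XY(2)] in simp)
qed

theorem mainTheorem5:
  fixes lam :: "'a::field" and n :: nat and X Y X' Y' :: "'a mat"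
  assumes "lam \<noteq> 0"
    and "X \<in> carrier_mat n n" "Y \<in> carrier_mat n n"
    and "X' \<in> carrier_mat n n" "Y' \<in> carrier_mat n n"
  shows "(pair_similar n (X, Y) (X', Y') \<longleftrightarrow>
           pair_weakly_similar (7*(5*n) + 6)
             (M1 (lam \<cdot>\<^sub>m 1\<^sub>m (5*n) + Jmat n), M2 lam (Kmat n X Y))
             (M1 (lam \<cdot>\<^sub>m 1\<^sub>m (5*n) + Jmat n), M2 lam (Kmat n X' Y')))
       \<and> M1 (lam \<cdot>\<^sub>m 1\<^sub>m (5*n) + Jmat n) * M2 lam (Kmat n X Y)
           = M2 lam (Kmat n X Y) * M1 (lam \<cdot>\<^sub>m 1\<^sub>m (5*n) + Jmat n)
       \<and> (lam \<noteq> -1 \<longrightarrow> invertible_mat (M1 (lam \<cdot>\<^sub>m 1\<^sub>m (5*n) + Jmat n) + M2 lam (Kmat n X Y)))"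
  using fwd[OF assms(2,3)] bwd[OF assms] comm_part inv_part[OF assms(1)] by blast


end
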